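(* Let $2\leq m\leq n\leq p$ be integers. The $m\times n\times p$ chessboard has a bi-sited closed knight tour if and only if all of the following hold: (a) at least one of $m,n,p$ is even; (b) $n\geq 3$; (c) $p\geq 4$.
   Context: The $m\times n\times p$ board is $\mathcal{B}=\{1,\dots,m\}\times\{1,\dots,n\}\times\{1,\dots,p\}$. Knight moves $\mathcal{C}_3$ are vectors in $\mathbb{Z}^3$ with exactly one coordinate in $\{\pm1\}$, exactly one in $\{\pm2\}$ and the remaining one $0$; cells are adjacent iff their difference is in $\mathcal{C}_3$; a closed knight tour is a Hamiltonian cycle. Let $e_1,e_2,e_3$ be the standard basis. For $c\in\mathcal{C}_3$ let $e_{[c,1]}$ (resp. $e_{[c,2]}$) be the basis vector of the coordinate where $c$ has entry $\pm1$ (resp. $\pm2$), and $\tilde c=-\langle c,e_{[c,1]}\rangle e_{[c,1]}+\langle c,e_{[c,2]}\rangle e_{[c,2]}$. For a Hamiltonian cycle $(a^i)_{i\in I}$, $I=\{1,\dots,N\}$, indices mod $N$, a \emph{site} given by edges $\{a^n,a^{n+1}\}$, $\{a^m,a^{m+1}\}$ is one of the following, for some $c\in\mathcal{C}_3$ and some $i$: (wopp) $a^{n+1}=a^n+c$, $a^m=a^{m+1}+c$, $a^m-a^{n+1}=a^{m+1}-a^n\in\{\pm2e_i\}$; (nwopp) $a^{n+1}=a^n+c$, $a^{m+1}=a^m+c$, $a^m-a^n=a^{m+1}-a^{n+1}\in\{\pm2e_i\}$; (wocp) $a^{n+1}=a^n+c$, $a^{m+1}=a^m+\tilde c$, $a^m-a^n=\langle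 c,e_{[c,1]}\rangle e_{[c,1]}$; (nwocp) $a^{n+1}=a^n+c$, $a^m=a^{m+1}+\tilde c$, $a^{m+1}-a^n=\langle c,e_{[c,1]}\rangle e_{[c,1]}$. Its support is $\{a^n,a^{n+1},a^m,a^{m+1}\}$. A closed tour is \emph{bi-sited} if it contains two sites with disjoint supports. *)

theory Defs
  imports Main
begin

text \<open>Cells / vectors of Z^3 as integer triples; coordinates indexed by 0,1,2
  (standing for the paper's coordinates 1,2,3).\<close>

type_synonym pt = "int \<times> int \<times> int"

fun cd :: "pt \<Rightarrow> nat \<Rightarrow> int" where
  "cd (x, y, z) i = (if i = 0 then x else if i = 1 then y else z)"

definition mkpt :: "(nat \<Rightarrow> int) \<Rightarrow> pt" where
  "mkpt f = (f 0, f 1, f 2)"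

definition padd :: "pt \<Rightarrow> pt \<Rightarrow> pt" where
  "padd u v = mkpt (\<lambda>i. cd u i + cd v i)"

definition psub :: "pt \<Rightarrow> pt \<Rightarrow> pt" where
  "psub u v = mkpt (\<lambda>i. cd u i - cd v i)"

definition psmul :: "int \<Rightarrow> pt \<Rightarrow> pt" where
  "psmul k u = mkpt (\<lambda>i. k * cd u i)"

definition ebas :: "nat \<Rightarrow> pt" where
  "ebas i = mkpt (\<lambda>j. if j = i then 1 else 0)"

definition pinner :: "pt \<Rightarrow> pt \<Rightarrow> int" where
  "pinner u v = cd u 0 * cd v 0 + cd u 1 * cd v 1 + cd u 2 * cd v 2"

definition knight_moves :: "pt set" where
  "knight_moves = {c. \<exists>i j k. {i, j, k} = {0, 1, 2} \<and>
       \<bar>cd c i\<bar> = 1 \<and> \<bar>cd c j\<bar> = 2 \<and> cd c k = 0}"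

definition idx1 :: "pt \<Rightarrow> nat" where
  "idx1 c = (THE i. i < 3 \<and> \<bar>cd c i\<bar> = 1)"

definition idx2 :: "pt \<Rightarrow> nat" where
  "idx2 c = (THE i. i < 3 \<and> \<bar>cd c i\<bar> = 2)"

definition ctilde :: "pt \<Rightarrow> pt" where
  "ctilde c = padd (psmul (- pinner c (ebas (idx1 c))) (ebas (idx1 c)))
                   (psmul (pinner c (ebas (idx2 c))) (ebas (idx2 c)))"

definition board :: "nat \<Rightarrow> nat \<Rightarrow> nat \<Rightarrow> pt set" where
  "board m n p = {(x, y, z). 1 \<le> x \<and> x \<le> int m \<and> 1 \<le> y \<and> y \<le> int n \<and> 1 \<le> z \<and> z \<le> int p}"

text \<open>A closed knight tour (Hamiltonian cycle of the knight graph) on B, given as a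
  cyclic enumeration a 0, ..., a (N-1) of B (indices taken mod N), consecutive
  cells differing by a knight move.\<close>
definition closed_tour :: "pt set \<Rightarrow> nat \<Rightarrow> (nat \<Rightarrow> pt) \<Rightarrow> bool" where
  "closed_tour B N a \<longleftrightarrow> finite B \<and> N = card B \<and> 3 \<le> N \<and> bij_betw a {..<N} B \<and>
     (\<forall>i<N. psub (a (Suc i mod N)) (a i) \<in> knight_moves)"

definition is_site :: "nat \<Rightarrow> (nat \<Rightarrow> pt) \<Rightarrow> nat \<Rightarrow> nat \<Rightarrow> bool" where
  "is_site N a n m \<longleftrightarrow> n < N \<and> m < N \<and>
    (let an = a n; an1 = a (Suc n mod N); am = a m; am1 = a (Suc m mod N) in
     \<exists>c \<in> knight_moves. \<exists>i < 3.
       (an1 = padd an c \<and> am = padd am1 c \<and> psub am an1 = psub am1 an \<and>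
          psub am an1 \<in> {psmul 2 (ebas i), psmul (-2) (ebas i)})
     \<or> (an1 = padd an c \<and> am1 = padd am c \<and> psub am an = psub am1 an1 \<and>
          psub am an \<in> {psmul 2 (ebas i), psmul (-2) (ebas i)})
     \<or> (an1 = padd an c \<and> am1 = padd am (ctilde c) \<and>
          psub am an = psmul (pinner c (ebas (idx1 c))) (ebas (idx1 c)))
     \<or> (an1 = padd an c \<and> am = padd am1 (ctilde c) \<and>
          psub am1 an = psmul (pinner c (ebas (idx1 c))) (ebas (idx1 c))))"

definition site_support :: "nat \<Rightarrow> (nat \<Rightarrow> pt) \<Rightarrow> nat \<Rightarrow> nat \<Rightarrow> pt set" where
  "site_support N a n m = {a n, a (Suc n mod N), a m, a (Suc m mod N)}"

definition bi_sited :: "nat \<Rightarrow> (nat \<Rightarrow> pt) \<Rightarrow> bool" where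
  "bi_sited N a \<longleftrightarrow> (\<exists>n m n' m'. is_site N a n m \<and> is_site N a n' m' \<and>
      site_support N a n m \<inter> site_support N a n' m' = {})"

definition has_bisited_tour :: "nat \<Rightarrow> nat \<Rightarrow> nat \<Rightarrow> bool" where
  "has_bisited_tour m n p \<longleftrightarrow> (\<exists>N a. closed_tour (board m n p) N a \<and> bi_sited N a)"

end

theory Submission
  imports Defs
begin


lemma padd_eq[simp]: "padd (x1,y1,z1) (x2,y2,z2) = (x1+x2, y1+y2, z1+z2)"
  by (simp add: padd_def mkpt_def)
lemma psub_eq[simp]: "psub (x1,y1,z1) (x2,y2,z2) = (x1-x2, y1-y2, z1-z2)"
  by (simp add: psub_def mkpt_def)
lemma psmul_eq[simp]: "psmul k (x,y,z) = (k*x, k*y, k*z)"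
  by (simp add: psmul_def mkpt_def)
lemma ebas_eq[simp]: "ebas 0 = (1,0,0)" "ebas 1 = (0,1,0)" "ebas (Suc 0) = (0,1,0)" "ebas 2 = (0,0,1)"
  by (simp_all add: ebas_def mkpt_def)

definition kn :: "pt \<Rightarrow> bool" where
  "kn v = (case v of (x,y,z) \<Rightarrow>
     (\<bar>x\<bar>=1 \<and> \<bar>y\<bar>=2 \<and> z=0) \<or> (\<bar>x\<bar>=1 \<and> y=0 \<and> \<bar>z\<bar>=2) \<or> (x=0 \<and> \<bar>y\<bar>=1 \<and> \<bar>z\<bar>=2) \<or>
     (\<bar>x\<bar>=2 \<and> \<bar>y\<bar>=1 \<and> z=0) \<or> (\<bar>x\<bar>=2 \<and> y=0 \<and> \<bar>z\<bar>=1) \<or> (x=0 \<and> \<bar>y\<bar>=2 \<and> \<bar>z\<bar>=1))"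

lemma knight_iff: "v \<in> knight_moves \<longleftrightarrow> kn v"
proof (cases v)
  case (fields x y z)
  show ?thesis
  proof
    assume "v \<in> knight_moves"
    then obtain i j k where ijk: "{i,j,k} = {0::nat,1,2}" "\<bar>cd v i\<bar> = 1" "\<bar>cd v j\<bar> = 2" "cd v k = 0"
      unfolding knight_moves_def by blast
    have "i \<in> {0,1,2}" "j \<in> {0,1,2}" "k \<in> {0,1,2}" using ijk(1) by blast+
    then show "kn v" using ijk(2-4) unfolding kn_def fields by (auto split: if_splits)
  next
    assume "kn v"
    then have "(\<bar>x\<bar>=1 \<and> \<bar>y\<bar>=2 \<and> z=0) \<or> (\<bar>x\<bar>=1 \<and> y=0 \<and> \<bar>z\<bar>=2) \<or> (x=0 \<and> \<bar>y\<bar>=1 \<and> \<bar>z\<bar>=2) \<or>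
     (\<bar>x\<bar>=2 \<and> \<bar>y\<bar>=1 \<and> z=0) \<or> (\<bar>x\<bar>=2 \<and> y=0 \<and> \<bar>z\<bar>=1) \<or> (x=0 \<and> \<bar>y\<bar>=2 \<and> \<bar>z\<bar>=1)"
      by (simp add: kn_def fields)
    then show "v \<in> knight_moves" unfolding fields knight_moves_def mem_Collect_eq
      apply (elim disjE conjE)
      subgoal by (rule exI[of _ 0], rule exI[of _ 1], rule exI[of _ 2]) auto
      subgoal by (rule exI[of _ 0], rule exI[of _ 2], rule exI[of _ 1]) auto
      subgoal by (rule exI[of _ 1], rule exI[of _ 2], rule exI[of _ 0]) auto
      subgoal by (rule exI[of _ 1], rule exI[of _ 0], rule exI[of _ 2]) auto
      subgoal by (rule exI[of _ 2], rule exI[of _ 0], rule exI[of _ 1]) auto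
      subgoal by (rule exI[of _ 2], rule exI[of _ 1], rule exI[of _ 0]) auto
      done
  qed
qed

definition adjk :: "pt \<times> pt \<Rightarrow> bool" where
  "adjk e = (psub (snd e) (fst e) \<in> knight_moves)"

definition cedges :: "'a list \<Rightarrow> ('a \<times> 'a) set" where
  "cedges xs = set (zip xs (rotate1 xs))"

lemma cedges_nth: "cedges xs = {(xs!i, xs!(Suc i mod length xs)) | i. i < length xs}"
  unfolding cedges_def set_zip by (auto simp: nth_rotate1)

lemma zip_snoc_tl: "xs \<noteq> [] \<Longrightarrow> zip xs (tl xs @ [z]) = zip (butlast xs) (tl xs) @ [(last xs, z)]"
proof (induction xs)
  case Nil then show ?case by simp
next
  case (Cons x xs)
  show ?case
  proof (cases xs)
    case Nil then show ?thesis by simp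
  next
    case (Cons y ys)
    then show ?thesis using Cons.IH by simp
  qed
qed

definition pathE :: "'a list \<Rightarrow> ('a \<times> 'a) set" where
  "pathE xs = set (zip (butlast xs) (tl xs))"

lemma cedges_split: "xs \<noteq> [] \<Longrightarrow> cedges xs = pathE xs \<union> {(last xs, hd xs)}"
  unfolding cedges_def pathE_def by (simp add: rotate1_hd_tl zip_snoc_tl)

lemma cedges_append: assumes "xs \<noteq> []" "ys \<noteq> []"
  shows "cedges (xs @ ys) = pathE xs \<union> pathE ys \<union> {(last xs, hd ys), (last ys, hd xs)}"
proof -
  have r: "rotate1 (xs @ ys) = (tl xs @ [hd ys]) @ (tl ys @ [hd xs])"
    using assms by (simp add: rotate1_hd_tl)
  have "zip (xs @ ys) (rotate1 (xs @ ys)) = zip xs (tl xs @ [hd ys]) @ zip ys (tl ys @ [hd xs])"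
    unfolding r by (rule zip_append) (use assms in simp)
  then show ?thesis unfolding cedges_def pathE_def using assms by (auto simp: zip_snoc_tl)
qed

lemma cedges_rotate1: "cedges (rotate1 xs) = cedges xs"
proof (cases xs)
  case Nil then show ?thesis by simp
next
  case (Cons x ys)
  show ?thesis
  proof (cases ys)
    case Nil then show ?thesis using Cons by simp
  next
    case (Cons y zs)
    have a: "cedges (ys @ [x]) = pathE ys \<union> pathE [x] \<union> {(last ys, x), (x, hd ys)}"
      using cedges_append[of ys "[x]"] Cons by simp
    have b: "cedges ([x] @ ys) = pathE [x] \<union> pathE ys \<union> {(x, hd ys), (last ys, x)}"
      using cedges_append[of "[x]" ys] Cons by simp
    show ?thesis using a b \<open>xs = x # ys\<close> by auto
  qed
qed

lemma cedges_rotate: "cedges (rotate k xs) = cedges xs"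
  by (induction k) (simp_all add: cedges_rotate1)

lemma cedges_sub: "(p,q) \<in> cedges xs \<Longrightarrow> p \<in> set xs \<and> q \<in> set xs"
  unfolding cedges_def by (auto dest: set_zip_leftD set_zip_rightD)

lemma rot_edge: assumes "(p,q) \<in> cedges xs"
  shows "\<exists>k. rotate k xs \<noteq> [] \<and> last (rotate k xs) = p \<and> hd (rotate k xs) = q"
proof -
  from assms obtain i where i: "i < length xs" "p = xs!i" "q = xs!(Suc i mod length xs)"
    unfolding cedges_nth by blast
  let ?N = "length xs"
  let ?r = "rotate (Suc i) xs"
  have ne: "?r \<noteq> []" using i by auto
  have "hd ?r = ?r ! 0" using ne by (simp add: hd_conv_nth)
  also have "\<dots> = xs ! ((Suc i + 0) mod ?N)" by (rule nth_rotate) (use i in auto)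
  finally have h: "hd ?r = q" using i by simp
  have "last ?r = ?r ! (?N - 1)" using ne by (simp add: last_conv_nth)
  also have "\<dots> = xs ! ((Suc i + (?N - 1)) mod ?N)" by (rule nth_rotate) (use i in auto)
  also have "(Suc i + (?N - 1)) mod ?N = i" using i
    by (metis Suc_pred' add_Suc add_Suc_right gr_implies_not0 mod_add_self2 mod_less not_gr_zero plus_1_eq_Suc add.commute)
  finally have l: "last ?r = p" using i by simp
  show ?thesis using ne h l by blast
qed

lemma gmerge:
  assumes dx: "distinct xs" and dy: "distinct ys" and disj: "set xs \<inter> set ys = {}"
    and ex: "(a,a') \<in> cedges xs" and ey: "(b,b') \<in> cedges ys"
    and ax: "\<forall>e\<in>cedges xs. adjk e" and ay: "\<forall>e\<in>cedges ys. adjk e"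
    and c1: "adjk (a, b')" and c2: "adjk (b, a')"
  shows "\<exists>zs. distinct zs \<and> set zs = set xs \<union> set ys \<and> length zs = length xs + length ys \<and>
     (\<forall>e\<in>cedges zs. adjk e) \<and> cedges xs - {(a,a')} \<subseteq> cedges zs \<and> cedges ys - {(b,b')} \<subseteq> cedges zs"
proof -
  obtain k where k: "rotate k xs \<noteq> []" "last (rotate k xs) = a" "hd (rotate k xs) = a'"
    using rot_edge[OF ex] by blast
  obtain l where l: "rotate l ys \<noteq> []" "last (rotate l ys) = b" "hd (rotate l ys) = b'"
    using rot_edge[OF ey] by blast
  let ?X = "rotate k xs" and ?Y = "rotate l ys"
  have CX: "cedges xs = pathE ?X \<union> {(a,a')}" using cedges_split[OF k(1)] k cedges_rotate by metis
  have CY: "cedges ys = pathE ?Y \<union> {(b,b')}" using cedges_split[OF l(1)] l cedges_rotate by metis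
  have CZ: "cedges (?X @ ?Y) = pathE ?X \<union> pathE ?Y \<union> {(a, b'), (b, a')}"
    using cedges_append[OF k(1) l(1)] k l by simp
  show ?thesis
    apply (rule exI[of _ "?X @ ?Y"])
    using dx dy disj ax ay c1 c2 CX CY CZ by auto
qed

definition siteE :: "pt \<times> pt \<Rightarrow> pt \<times> pt \<Rightarrow> bool" where
  "siteE e f \<longleftrightarrow>
    (let an = fst e; an1 = snd e; am = fst f; am1 = snd f in
     \<exists>c \<in> knight_moves. \<exists>i < 3.
       (an1 = padd an c \<and> am = padd am1 c \<and> psub am an1 = psub am1 an \<and>
          psub am an1 \<in> {psmul 2 (ebas i), psmul (-2) (ebas i)})
     \<or> (an1 = padd an c \<and> am1 = padd am c \<and> psub am an = psub am1 an1 \<and>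
          psub am an \<in> {psmul 2 (ebas i), psmul (-2) (ebas i)})
     \<or> (an1 = padd an c \<and> am1 = padd am (ctilde c) \<and>
          psub am an = psmul (pinner c (ebas (idx1 c))) (ebas (idx1 c)))
     \<or> (an1 = padd an c \<and> am = padd am1 (ctilde c) \<and>
          psub am1 an = psmul (pinner c (ebas (idx1 c))) (ebas (idx1 c))))"

lemma is_site_iff: "is_site N a n m \<longleftrightarrow> n < N \<and> m < N \<and> siteE (a n, a (Suc n mod N)) (a m, a (Suc m mod N))"
  by (simp add: is_site_def siteE_def Let_def)

definition supp :: "pt \<times> pt \<Rightarrow> pt \<times> pt \<Rightarrow> pt set" where
  "supp e f = {fst e, snd e, fst f, snd f}"

definition bisL :: "pt list \<Rightarrow> bool" where
  "bisL xs \<longleftrightarrow> (\<exists>e1 f1 e2 f2. e1 \<in> cedges xs \<and> f1 \<in> cedges xs \<and> e2 \<in> cedges xs \<and> f2 \<in> cedges xs \<and>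
     siteE e1 f1 \<and> siteE e2 f2 \<and> supp e1 f1 \<inter> supp e2 f2 = {})"

lemma to_has:
  assumes "distinct xs" "set xs = board m n p" "3 \<le> length xs" "\<forall>e\<in>cedges xs. adjk e" "bisL xs"
  shows "has_bisited_tour m n p"
proof -
  let ?N = "length xs" and ?a = "(!) xs"
  have E: "\<And>i. i < ?N \<Longrightarrow> (xs!i, xs!(Suc i mod ?N)) \<in> cedges xs" unfolding cedges_nth by blast
  have ct: "closed_tour (board m n p) ?N ?a"
    unfolding closed_tour_def
  proof (intro conjI allI impI)
    show "finite (board m n p)" using assms(2) by (metis List.finite_set)
    show "?N = card (board m n p)" using assms(1,2) distinct_card by metis
    show "3 \<le> ?N" by fact
    show "bij_betw ?a {..<?N} (board m n p)" using bij_betw_nth[OF assms(1)] assms(2) by simp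
    fix i assume "i < ?N"
    then show "psub (?a (Suc i mod ?N)) (?a i) \<in> knight_moves" using E assms(4) unfolding adjk_def by force
  qed
  obtain e1 f1 e2 f2 where S: "e1 \<in> cedges xs" "f1 \<in> cedges xs" "e2 \<in> cedges xs" "f2 \<in> cedges xs"
     "siteE e1 f1" "siteE e2 f2" "supp e1 f1 \<inter> supp e2 f2 = {}" using assms(5) unfolding bisL_def by blast
  have I: "\<And>e. e \<in> cedges xs \<Longrightarrow> \<exists>i<?N. e = (xs!i, xs!(Suc i mod ?N))" unfolding cedges_nth by blast
  obtain n1 where n1: "n1 < ?N" "e1 = (xs!n1, xs!(Suc n1 mod ?N))" using I[OF S(1)] by blast
  obtain m1 where m1: "m1 < ?N" "f1 = (xs!m1, xs!(Suc m1 mod ?N))" using I[OF S(2)] by blast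
  obtain n2 where n2: "n2 < ?N" "e2 = (xs!n2, xs!(Suc n2 mod ?N))" using I[OF S(3)] by blast
  obtain m2 where m2: "m2 < ?N" "f2 = (xs!m2, xs!(Suc m2 mod ?N))" using I[OF S(4)] by blast
  have "bi_sited ?N ?a"
    unfolding bi_sited_def
    apply (rule exI[of _ n1], rule exI[of _ m1], rule exI[of _ n2], rule exI[of _ m2])
    using S n1 m1 n2 m2 by (simp add: is_site_iff site_support_def supp_def)
  then show ?thesis unfolding has_bisited_tour_def using ct by blast
qed

fun tr :: "pt \<Rightarrow> pt \<Rightarrow> pt" where
  "tr (u,v,w) (x,y,z) = (x+u, y+v, z+w)"

lemma tr_padd: "(tr v q = padd (tr v p) c) = (q = padd p c)"
  by (cases v; cases p; cases q; cases c) auto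
lemma tr_psub: "psub (tr v q) (tr v p) = psub q p"
  by (cases v; cases p; cases q) auto
lemma tr_inj: "inj (tr v)"
  by (rule injI) (metis tr_psub psub_eq prod_cases3 diff_0_right padd_eq tr_padd add_0_right)

lemma siteE_tr: "siteE (tr v p, tr v q) (tr v r, tr v s) = siteE (p,q) (r,s)"
  unfolding siteE_def Let_def fst_conv snd_conv tr_padd tr_psub ..

lemma cedges_map: "cedges (map f xs) = (\<lambda>(p,q). (f p, f q)) ` cedges xs"
  unfolding cedges_def rotate1_map zip_map_map by simp

lemma supp_tr: "supp (tr v p, tr v q) (tr v r, tr v s) = tr v ` supp (p,q) (r,s)"
  unfolding supp_def by auto

lemma trans_tour:
  assumes "distinct ys" "\<forall>e\<in>cedges ys. adjk e" "bisL ys"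
  shows "distinct (map (tr v) ys) \<and> (\<forall>e\<in>cedges (map (tr v) ys). adjk e) \<and> bisL (map (tr v) ys)"
proof (intro conjI)
  show "distinct (map (tr v) ys)" using assms(1) tr_inj[of v] by (simp add: distinct_map inj_on_subset[of _ UNIV])
  show "\<forall>e\<in>cedges (map (tr v) ys). adjk e" using assms(2) by (auto simp: cedges_map adjk_def tr_psub)
  obtain e1 f1 e2 f2 where S: "e1 \<in> cedges ys" "f1 \<in> cedges ys" "e2 \<in> cedges ys" "f2 \<in> cedges ys"
     "siteE e1 f1" "siteE e2 f2" "supp e1 f1 \<inter> supp e2 f2 = {}" using assms(3) unfolding bisL_def by blast
  let ?g = "\<lambda>(p,q). (tr v p, tr v q)"
  have st: "\<And>e f. siteE (?g e) (?g f) = siteE e f" by (auto simp: siteE_tr split: prod.splits)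
  have sp: "\<And>e f. supp (?g e) (?g f) = tr v ` supp e f" by (auto simp: supp_tr split: prod.splits)
  have "supp (?g e1) (?g f1) \<inter> supp (?g e2) (?g f2) = {}"
    unfolding sp using S(7) tr_inj by (simp add: image_Int[symmetric])
  then show "bisL (map (tr v) ys)" unfolding bisL_def cedges_map
    apply (rule_tac x="?g e1" in exI, rule_tac x="?g f1" in exI, rule_tac x="?g e2" in exI, rule_tac x="?g f2" in exI)
    using S st by blast
qed

lemma one_site:
  assumes "bisL xs"
  shows "\<exists>e f. e \<in> cedges xs - {d} \<and> f \<in> cedges xs - {d} \<and> siteE e f \<and> supp e f \<subseteq> set xs"
proof -
  obtain e1 f1 e2 f2 where S: "e1 \<in> cedges xs" "f1 \<in> cedges xs" "e2 \<in> cedges xs" "f2 \<in> cedges xs"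
     "siteE e1 f1" "siteE e2 f2" "supp e1 f1 \<inter> supp e2 f2 = {}" using assms unfolding bisL_def by blast
  have sub: "\<And>e f. e \<in> cedges xs \<Longrightarrow> f \<in> cedges xs \<Longrightarrow> supp e f \<subseteq> set xs"
    unfolding supp_def using cedges_sub by (metis insert_subset prod.collapse empty_subsetI)
  show ?thesis
  proof (cases "d = e1 \<or> d = f1")
    case True
    then have "d \<noteq> e2 \<and> d \<noteq> f2" using S(7) unfolding supp_def by auto
    then show ?thesis using S sub by blast
  next
    case False then show ?thesis using S sub by blast
  qed
qed

lemma assemble:
  assumes dx: "distinct xs" and dy: "distinct ys" and disj: "set xs \<inter> set ys = {}"
    and ex: "(a,a') \<in> cedges xs" and ey: "(b,b') \<in> cedges ys"
    and ax: "\<forall>e\<in>cedges xs. adjk e" and ay: "\<forall>e\<in>cedges ys. adjk e"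
    and bxs: "bisL xs" and bys: "bisL ys"
    and c1: "adjk (a, b')" and c2: "adjk (b, a')"
  shows "\<exists>zs. distinct zs \<and> set zs = set xs \<union> set ys \<and> length zs = length xs + length ys \<and>
     (\<forall>e\<in>cedges zs. adjk e) \<and> bisL zs \<and> cedges xs - {(a,a')} \<subseteq> cedges zs \<and> cedges ys - {(b,b')} \<subseteq> cedges zs"
proof -
  obtain zs where Z: "distinct zs" "set zs = set xs \<union> set ys" "length zs = length xs + length ys"
     "\<forall>e\<in>cedges zs. adjk e" "cedges xs - {(a,a')} \<subseteq> cedges zs" "cedges ys - {(b,b')} \<subseteq> cedges zs"
    using gmerge[OF dx dy disj ex ey ax ay c1 c2] by blast
  obtain e1 f1 where 1: "e1 \<in> cedges xs - {(a,a')}" "f1 \<in> cedges xs - {(a,a')}" "siteE e1 f1" "supp e1 f1 \<subseteq> set xs"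
    using one_site[OF bxs] by blast
  obtain e2 f2 where 2: "e2 \<in> cedges ys - {(b,b')}" "f2 \<in> cedges ys - {(b,b')}" "siteE e2 f2" "supp e2 f2 \<subseteq> set ys"
    using one_site[OF bys] by blast
  have "bisL zs" unfolding bisL_def
    apply (rule exI[of _ e1], rule exI[of _ f1], rule exI[of _ e2], rule exI[of _ f2])
    using 1 2 Z disj by blast
  then show ?thesis using Z by blast
qed

lemma board_x: "board a1 b c \<union> tr (int a1,0,0) ` board a2 b c = board (a1+a2) b c"
proof
  show "board a1 b c \<union> tr (int a1,0,0) ` board a2 b c \<subseteq> board (a1+a2) b c"
    unfolding board_def by auto
  show "board (a1+a2) b c \<subseteq> board a1 b c \<union> tr (int a1,0,0) ` board a2 b c"
  proof
    fix p assume p: "p \<in> board (a1+a2) b c"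
    obtain x y z where pe: "p = (x,y,z)" by (cases p)
    show "p \<in> board a1 b c \<union> tr (int a1,0,0) ` board a2 b c"
    proof (cases "x \<le> int a1")
      case True then show ?thesis using p pe unfolding board_def by auto
    next
      case False
      have "(x - int a1, y, z) \<in> board a2 b c" using p pe False unfolding board_def by auto
      moreover have "p = tr (int a1,0,0) (x - int a1, y, z)" using pe by simp
      ultimately show ?thesis by blast
    qed
  qed
qed

lemma board_y: "board a b1 c \<union> tr (0,int b1,0) ` board a b2 c = board a (b1+b2) c"
proof
  show "board a b1 c \<union> tr (0,int b1,0) ` board a b2 c \<subseteq> board a (b1+b2) c"
    unfolding board_def by auto
  show "board a (b1+b2) c \<subseteq> board a b1 c \<union> tr (0,int b1,0) ` board a b2 c"
  proof
    fix p assume p: "p \<in> board a (b1+b2) c"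
    obtain x y z where pe: "p = (x,y,z)" by (cases p)
    show "p \<in> board a b1 c \<union> tr (0,int b1,0) ` board a b2 c"
    proof (cases "y \<le> int b1")
      case True then show ?thesis using p pe unfolding board_def by auto
    next
      case False
      have "(x, y - int b1, z) \<in> board a b2 c" using p pe False unfolding board_def by auto
      moreover have "p = tr (0,int b1,0) (x, y - int b1, z)" using pe by simp
      ultimately show ?thesis by blast
    qed
  qed
qed

lemma board_z: "board a b c1 \<union> tr (0,0,int c1) ` board a b c2 = board a b (c1+c2)"
proof
  show "board a b c1 \<union> tr (0,0,int c1) ` board a b c2 \<subseteq> board a b (c1+c2)"
    unfolding board_def by auto
  show "board a b (c1+c2) \<subseteq> board a b c1 \<union> tr (0,0,int c1) ` board a b c2"
  proof
    fix p assume p: "p \<in> board a b (c1+c2)"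
    obtain x y z where pe: "p = (x,y,z)" by (cases p)
    show "p \<in> board a b c1 \<union> tr (0,0,int c1) ` board a b c2"
    proof (cases "z \<le> int c1")
      case True then show ?thesis using p pe unfolding board_def by auto
    next
      case False
      have "(x, y, z - int c1) \<in> board a b c2" using p pe False unfolding board_def by auto
      moreover have "p = tr (0,0,int c1) (x, y, z - int c1)" using pe by simp
      ultimately show ?thesis by blast
    qed
  qed
qed

lemma board_x_disj: "board a1 b c \<inter> tr (int a1,0,0) ` board a2 b c = {}"
  unfolding board_def by auto
lemma board_y_disj: "board a b1 c \<inter> tr (0,int b1,0) ` board a b2 c = {}"
  unfolding board_def by auto
lemma board_z_disj: "board a b c1 \<inter> tr (0,0,int c1) ` board a b c2 = {}"
  unfolding board_def by auto

definition hXZ :: "pt \<times> pt" where "hXZ = ((2,1,3),(1,1,1))"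
definition zXZ :: "nat \<Rightarrow> pt \<times> pt" where "zXZ a = ((int a - 1,2,1),(int a,2,3))"
definition hXY :: "pt \<times> pt" where "hXY = ((1,1,1),(1,3,2))"
definition zXY :: "nat \<Rightarrow> pt \<times> pt" where "zXY a = ((int a,1,2),(int a,3,1))"
definition hYZ :: "pt \<times> pt" where "hYZ = ((2,1,3),(1,1,1))"
definition zYZ :: "nat \<Rightarrow> pt \<times> pt" where "zYZ b = ((1,int b,3),(2,int b,1))"
definition hYX :: "pt \<times> pt" where "hYX = ((3,2,1),(1,1,1))"
definition zYX :: "nat \<Rightarrow> pt \<times> pt" where "zYX b = ((1,int b - 1,2),(3,int b,2))"
definition hZY :: "pt \<times> pt" where "hZY = ((1,1,1),(1,3,2))"
definition zZY :: "nat \<Rightarrow> pt \<times> pt" where "zZY c = ((2,3,int c),(2,1,int c - 1))"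
definition hZX :: "pt \<times> pt" where "hZX = ((1,2,2),(3,2,1))"
definition zZX :: "nat \<Rightarrow> pt \<times> pt" where "zZX c = ((3,1,int c - 1),(1,1,int c))"

lemmas pat_defs = hXZ_def zXZ_def hXY_def zXY_def hYZ_def zYZ_def hYX_def zYX_def
  hZY_def zZY_def hZX_def zZX_def

definition xpat :: "nat \<Rightarrow> nat \<Rightarrow> pt list \<Rightarrow> bool" where
  "xpat a c xs = (if 3 \<le> c then hXZ \<in> cedges xs \<and> zXZ a \<in> cedges xs else hXY \<in> cedges xs \<and> zXY a \<in> cedges xs)"
definition ypat :: "nat \<Rightarrow> nat \<Rightarrow> pt list \<Rightarrow> bool" where
  "ypat b c xs = (if 3 \<le> c then hYZ \<in> cedges xs \<and> zYZ b \<in> cedges xs else hYX \<in> cedges xs \<and> zYX b \<in> cedges xs)"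
definition zpat :: "nat \<Rightarrow> nat \<Rightarrow> pt list \<Rightarrow> bool" where
  "zpat b c xs = (if 3 \<le> b then hZY \<in> cedges xs \<and> zZY c \<in> cedges xs else hZX \<in> cedges xs \<and> zZX c \<in> cedges xs)"

definition GoodL :: "nat \<Rightarrow> nat \<Rightarrow> nat \<Rightarrow> nat set \<Rightarrow> pt list \<Rightarrow> bool" where
  "GoodL a b c S xs \<longleftrightarrow> distinct xs \<and> set xs = board a b c \<and> 3 \<le> length xs \<and> (\<forall>e\<in>cedges xs. adjk e) \<and> bisL xs \<and>
     (0 \<in> S \<longrightarrow> xpat a c xs) \<and> (1 \<in> S \<longrightarrow> ypat b c xs) \<and> (2 \<in> S \<longrightarrow> zpat b c xs)"

definition Good :: "nat \<Rightarrow> nat \<Rightarrow> nat \<Rightarrow> nat set \<Rightarrow> bool" where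
  "Good a b c S \<longleftrightarrow> (\<exists>xs. GoodL a b c S xs)"

lemma Good_mono: "Good a b c S \<Longrightarrow> T \<subseteq> S \<Longrightarrow> Good a b c T"
  unfolding Good_def GoodL_def by blast

lemma keep: "e \<in> A \<Longrightarrow> e \<noteq> d \<Longrightarrow> A - {d} \<subseteq> B \<Longrightarrow> e \<in> B" by blast

lemma keep_tr: "e \<in> A \<Longrightarrow> (\<lambda>(p,q). (tr v p, tr v q)) e \<noteq> d \<Longrightarrow>
   (\<lambda>(p,q). (tr v p, tr v q)) ` A - {d} \<subseteq> B \<Longrightarrow> (\<lambda>(p,q). (tr v p, tr v q)) e \<in> B" by blast

lemma adj_simp: "adjk (p,q) \<longleftrightarrow> kn (psub q p)" unfolding adjk_def knight_iff by simp

lemma keep_if: "(if P then e1 \<in> A \<and> e2 \<in> A else e3 \<in> A \<and> e4 \<in> A) \<Longrightarrow> e1 \<noteq> d \<Longrightarrow> e2 \<noteq> d \<Longrightarrow> e3 \<noteq> d \<Longrightarrow> e4 \<noteq> d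
  \<Longrightarrow> A - {d} \<subseteq> B \<Longrightarrow> (if P then e1 \<in> B \<and> e2 \<in> B else e3 \<in> B \<and> e4 \<in> B)"
  by (auto split: if_splits)

lemma mergeZ:
  assumes A: "GoodL a b c1 S xs" and B: "GoodL a b c2 T ys" and "2 \<in> S" "2 \<in> T" and c1: "3 \<le> c1"
  shows "Good a b (c1+c2) S"
proof -
  let ?v = "(0,0,int c1) :: pt"
  let ?g = "\<lambda>(p,q). (tr ?v p, tr ?v q)"
  let ?ys = "map (tr ?v) ys"
  have TT: "distinct ?ys \<and> (\<forall>e\<in>cedges ?ys. adjk e) \<and> bisL ?ys"
    using trans_tour[of ys ?v] B unfolding GoodL_def by blast
  have setys: "set ?ys = tr ?v ` board a b c2" using B unfolding GoodL_def by simp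
  have disj: "set xs \<inter> set ?ys = {}" using A setys board_z_disj unfolding GoodL_def by metis
  have un: "set xs \<union> set ?ys = board a b (c1+c2)" using A setys board_z unfolding GoodL_def by metis
  have ce: "cedges ?ys = ?g ` cedges ys" by (simp add: cedges_map)
  have lenA: "3 \<le> length xs" using A unfolding GoodL_def by blast
  have dx: "distinct xs" and ax: "\<forall>e\<in>cedges xs. adjk e" and bx: "bisL xs" using A unfolding GoodL_def by blast+
  have ownA: "zpat b c1 xs" using A \<open>2 \<in> S\<close> unfolding GoodL_def by simp
  have ownB: "zpat b c2 ys" using B \<open>2 \<in> T\<close> unfolding GoodL_def by simp
  have caseTrue: "3 \<le> b \<Longrightarrow> Good a b (c1+c2) S"
  proof -
    assume cnd: "3 \<le> b"
    have ea: "zZY c1 \<in> cedges xs" using ownA cnd unfolding zpat_def by simp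
    have eb: "?g hZY \<in> cedges ?ys" using ownB cnd unfolding zpat_def ce by simp
    have cr1: "adjk (fst (zZY c1), snd (?g hZY))" by (simp add: pat_defs adj_simp kn_def)
    have cr2: "adjk (fst (?g hZY), snd (zZY c1))" by (simp add: pat_defs adj_simp kn_def)
    obtain zs where Z: "distinct zs" "set zs = set xs \<union> set ?ys" "length zs = length xs + length ?ys"
      "\<forall>e\<in>cedges zs. adjk e" "bisL zs" "cedges xs - {zZY c1} \<subseteq> cedges zs" "cedges ?ys - {?g hZY} \<subseteq> cedges zs"
      using assemble[OF dx _ disj _ _ ax _ bx _ cr1 cr2] TT ea eb by auto
    have "GoodL a b (c1+c2) S zs"
      unfolding GoodL_def
    proof (intro conjI impI)
      show "distinct zs" "\<forall>e\<in>cedges zs. adjk e" "bisL zs" by (fact Z(1), fact Z(4), fact Z(5))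
      show "set zs = board a b (c1+c2)" using Z(2) un by simp
      show "3 \<le> length zs" using Z(3) lenA by simp
    next
      assume "0 \<in> S"
      have "xpat a c1 xs" using A \<open>0 \<in> S\<close> unfolding GoodL_def by simp
      then have "xpat a c1 zs" unfolding xpat_def
        by (rule keep_if[OF _ _ _ _ _ Z(6)]) (simp_all add: pat_defs)
      then show "xpat a (c1+c2) zs" unfolding xpat_def using c1 by simp
    next
      assume "1 \<in> S"
      have "ypat b c1 xs" using A \<open>1 \<in> S\<close> unfolding GoodL_def by simp
      then have "ypat b c1 zs" unfolding ypat_def
        by (rule keep_if[OF _ _ _ _ _ Z(6)]) (simp_all add: pat_defs)
      then show "ypat b (c1+c2) zs" unfolding ypat_def using c1 by simp
    next
      assume "2 \<in> S"
      have "zZY c2 \<in> cedges ys" using ownB cnd unfolding zpat_def by simp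
      moreover have "?g (zZY c2) \<noteq> ?g hZY" by (simp add: pat_defs)
      moreover have "?g ` cedges ys - {?g hZY} \<subseteq> cedges zs" using Z(7) unfolding ce .
      ultimately have "?g (zZY c2) \<in> cedges zs" by (rule keep_tr)
      moreover have "?g (zZY c2) = zZY (c1+c2)" by (simp add: pat_defs)
      ultimately have m2: "zZY (c1+c2) \<in> cedges zs" by simp
      have "hZY \<in> cedges xs" using ownA cnd unfolding zpat_def by simp
      moreover have "hZY \<noteq> zZY c1" by (simp add: pat_defs)
      ultimately have m1: "hZY \<in> cedges zs" using Z(6) by (rule keep)
      show "zpat b (c1+c2) zs" unfolding zpat_def using m1 m2 cnd c1 by simp
    qed
    then show ?thesis unfolding Good_def by blast
  qed
  have caseFalse: "\<not> 3 \<le> b \<Longrightarrow> Good a b (c1+c2) S"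
  proof -
    assume cnd: "\<not> 3 \<le> b"
    have ea: "zZX c1 \<in> cedges xs" using ownA cnd unfolding zpat_def by simp
    have eb: "?g hZX \<in> cedges ?ys" using ownB cnd unfolding zpat_def ce by simp
    have cr1: "adjk (fst (zZX c1), snd (?g hZX))" by (simp add: pat_defs adj_simp kn_def)
    have cr2: "adjk (fst (?g hZX), snd (zZX c1))" by (simp add: pat_defs adj_simp kn_def)
    obtain zs where Z: "distinct zs" "set zs = set xs \<union> set ?ys" "length zs = length xs + length ?ys"
      "\<forall>e\<in>cedges zs. adjk e" "bisL zs" "cedges xs - {zZX c1} \<subseteq> cedges zs" "cedges ?ys - {?g hZX} \<subseteq> cedges zs"
      using assemble[OF dx _ disj _ _ ax _ bx _ cr1 cr2] TT ea eb by auto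
    have "GoodL a b (c1+c2) S zs"
      unfolding GoodL_def
    proof (intro conjI impI)
      show "distinct zs" "\<forall>e\<in>cedges zs. adjk e" "bisL zs" by (fact Z(1), fact Z(4), fact Z(5))
      show "set zs = board a b (c1+c2)" using Z(2) un by simp
      show "3 \<le> length zs" using Z(3) lenA by simp
    next
      assume "0 \<in> S"
      have "xpat a c1 xs" using A \<open>0 \<in> S\<close> unfolding GoodL_def by simp
      then have "xpat a c1 zs" unfolding xpat_def
        by (rule keep_if[OF _ _ _ _ _ Z(6)]) (simp_all add: pat_defs)
      then show "xpat a (c1+c2) zs" unfolding xpat_def using c1 by simp
    next
      assume "1 \<in> S"
      have "ypat b c1 xs" using A \<open>1 \<in> S\<close> unfolding GoodL_def by simp
      then have "ypat b c1 zs" unfolding ypat_def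
        by (rule keep_if[OF _ _ _ _ _ Z(6)]) (simp_all add: pat_defs)
      then show "ypat b (c1+c2) zs" unfolding ypat_def using c1 by simp
    next
      assume "2 \<in> S"
      have "zZX c2 \<in> cedges ys" using ownB cnd unfolding zpat_def by simp
      moreover have "?g (zZX c2) \<noteq> ?g hZX" by (simp add: pat_defs)
      moreover have "?g ` cedges ys - {?g hZX} \<subseteq> cedges zs" using Z(7) unfolding ce .
      ultimately have "?g (zZX c2) \<in> cedges zs" by (rule keep_tr)
      moreover have "?g (zZX c2) = zZX (c1+c2)" by (simp add: pat_defs)
      ultimately have m2: "zZX (c1+c2) \<in> cedges zs" by simp
      have "hZX \<in> cedges xs" using ownA cnd unfolding zpat_def by simp
      moreover have "hZX \<noteq> zZX c1" by (simp add: pat_defs)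
      ultimately have m1: "hZX \<in> cedges zs" using Z(6) by (rule keep)
      show "zpat b (c1+c2) zs" unfolding zpat_def using m1 m2 cnd c1 by simp
    qed
    then show ?thesis unfolding Good_def by blast
  qed
  show ?thesis using caseTrue caseFalse by blast
qed

lemma mergeY:
  assumes A: "GoodL a b1 c S xs" and B: "GoodL a b2 c T ys" and "1 \<in> S" "1 \<in> T" and c1: "3 \<le> b1"
  shows "Good a (b1+b2) c S"
proof -
  let ?v = "(0,int b1,0) :: pt"
  let ?g = "\<lambda>(p,q). (tr ?v p, tr ?v q)"
  let ?ys = "map (tr ?v) ys"
  have TT: "distinct ?ys \<and> (\<forall>e\<in>cedges ?ys. adjk e) \<and> bisL ?ys"
    using trans_tour[of ys ?v] B unfolding GoodL_def by blast
  have setys: "set ?ys = tr ?v ` board a b2 c" using B unfolding GoodL_def by simp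
  have disj: "set xs \<inter> set ?ys = {}" using A setys board_y_disj unfolding GoodL_def by metis
  have un: "set xs \<union> set ?ys = board a (b1+b2) c" using A setys board_y unfolding GoodL_def by metis
  have ce: "cedges ?ys = ?g ` cedges ys" by (simp add: cedges_map)
  have lenA: "3 \<le> length xs" using A unfolding GoodL_def by blast
  have dx: "distinct xs" and ax: "\<forall>e\<in>cedges xs. adjk e" and bx: "bisL xs" using A unfolding GoodL_def by blast+
  have ownA: "ypat b1 c xs" using A \<open>1 \<in> S\<close> unfolding GoodL_def by simp
  have ownB: "ypat b2 c ys" using B \<open>1 \<in> T\<close> unfolding GoodL_def by simp
  have caseTrue: "3 \<le> c \<Longrightarrow> Good a (b1+b2) c S"
  proof -
    assume cnd: "3 \<le> c"
    have ea: "zYZ b1 \<in> cedges xs" using ownA cnd unfolding ypat_def by simp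
    have eb: "?g hYZ \<in> cedges ?ys" using ownB cnd unfolding ypat_def ce by simp
    have cr1: "adjk (fst (zYZ b1), snd (?g hYZ))" by (simp add: pat_defs adj_simp kn_def)
    have cr2: "adjk (fst (?g hYZ), snd (zYZ b1))" by (simp add: pat_defs adj_simp kn_def)
    obtain zs where Z: "distinct zs" "set zs = set xs \<union> set ?ys" "length zs = length xs + length ?ys"
      "\<forall>e\<in>cedges zs. adjk e" "bisL zs" "cedges xs - {zYZ b1} \<subseteq> cedges zs" "cedges ?ys - {?g hYZ} \<subseteq> cedges zs"
      using assemble[OF dx _ disj _ _ ax _ bx _ cr1 cr2] TT ea eb by auto
    have "GoodL a (b1+b2) c S zs"
      unfolding GoodL_def
    proof (intro conjI impI)
      show "distinct zs" "\<forall>e\<in>cedges zs. adjk e" "bisL zs" by (fact Z(1), fact Z(4), fact Z(5))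
      show "set zs = board a (b1+b2) c" using Z(2) un by simp
      show "3 \<le> length zs" using Z(3) lenA by simp
    next
      assume "0 \<in> S"
      have "xpat a c xs" using A \<open>0 \<in> S\<close> unfolding GoodL_def by simp
      then have "xpat a c zs" unfolding xpat_def
        by (rule keep_if[OF _ _ _ _ _ Z(6)]) (simp_all add: pat_defs)
      then show "xpat a c zs" unfolding xpat_def by simp
    next
      assume "2 \<in> S"
      have "zpat b1 c xs" using A \<open>2 \<in> S\<close> unfolding GoodL_def by simp
      then have "zpat b1 c zs" unfolding zpat_def
        by (rule keep_if[OF _ _ _ _ _ Z(6)]) (simp_all add: pat_defs)
      then show "zpat (b1+b2) c zs" unfolding zpat_def using c1 by simp
    next
      assume "1 \<in> S"
      have "zYZ b2 \<in> cedges ys" using ownB cnd unfolding ypat_def by simp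
      moreover have "?g (zYZ b2) \<noteq> ?g hYZ" by (simp add: pat_defs)
      moreover have "?g ` cedges ys - {?g hYZ} \<subseteq> cedges zs" using Z(7) unfolding ce .
      ultimately have "?g (zYZ b2) \<in> cedges zs" by (rule keep_tr)
      moreover have "?g (zYZ b2) = zYZ (b1+b2)" by (simp add: pat_defs)
      ultimately have m2: "zYZ (b1+b2) \<in> cedges zs" by simp
      have "hYZ \<in> cedges xs" using ownA cnd unfolding ypat_def by simp
      moreover have "hYZ \<noteq> zYZ b1" by (simp add: pat_defs)
      ultimately have m1: "hYZ \<in> cedges zs" using Z(6) by (rule keep)
      show "ypat (b1+b2) c zs" unfolding ypat_def using m1 m2 cnd c1 by simp
    qed
    then show ?thesis unfolding Good_def by blast
  qed
  have caseFalse: "\<not> 3 \<le> c \<Longrightarrow> Good a (b1+b2) c S"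
  proof -
    assume cnd: "\<not> 3 \<le> c"
    have ea: "zYX b1 \<in> cedges xs" using ownA cnd unfolding ypat_def by simp
    have eb: "?g hYX \<in> cedges ?ys" using ownB cnd unfolding ypat_def ce by simp
    have cr1: "adjk (fst (zYX b1), snd (?g hYX))" by (simp add: pat_defs adj_simp kn_def)
    have cr2: "adjk (fst (?g hYX), snd (zYX b1))" by (simp add: pat_defs adj_simp kn_def)
    obtain zs where Z: "distinct zs" "set zs = set xs \<union> set ?ys" "length zs = length xs + length ?ys"
      "\<forall>e\<in>cedges zs. adjk e" "bisL zs" "cedges xs - {zYX b1} \<subseteq> cedges zs" "cedges ?ys - {?g hYX} \<subseteq> cedges zs"
      using assemble[OF dx _ disj _ _ ax _ bx _ cr1 cr2] TT ea eb by auto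
    have "GoodL a (b1+b2) c S zs"
      unfolding GoodL_def
    proof (intro conjI impI)
      show "distinct zs" "\<forall>e\<in>cedges zs. adjk e" "bisL zs" by (fact Z(1), fact Z(4), fact Z(5))
      show "set zs = board a (b1+b2) c" using Z(2) un by simp
      show "3 \<le> length zs" using Z(3) lenA by simp
    next
      assume "0 \<in> S"
      have "xpat a c xs" using A \<open>0 \<in> S\<close> unfolding GoodL_def by simp
      then have "xpat a c zs" unfolding xpat_def
        by (rule keep_if[OF _ _ _ _ _ Z(6)]) (simp_all add: pat_defs)
      then show "xpat a c zs" unfolding xpat_def by simp
    next
      assume "2 \<in> S"
      have "zpat b1 c xs" using A \<open>2 \<in> S\<close> unfolding GoodL_def by simp
      then have "zpat b1 c zs" unfolding zpat_def
        by (rule keep_if[OF _ _ _ _ _ Z(6)]) (simp_all add: pat_defs)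
      then show "zpat (b1+b2) c zs" unfolding zpat_def using c1 by simp
    next
      assume "1 \<in> S"
      have "zYX b2 \<in> cedges ys" using ownB cnd unfolding ypat_def by simp
      moreover have "?g (zYX b2) \<noteq> ?g hYX" by (simp add: pat_defs)
      moreover have "?g ` cedges ys - {?g hYX} \<subseteq> cedges zs" using Z(7) unfolding ce .
      ultimately have "?g (zYX b2) \<in> cedges zs" by (rule keep_tr)
      moreover have "?g (zYX b2) = zYX (b1+b2)" by (simp add: pat_defs)
      ultimately have m2: "zYX (b1+b2) \<in> cedges zs" by simp
      have "hYX \<in> cedges xs" using ownA cnd unfolding ypat_def by simp
      moreover have "hYX \<noteq> zYX b1" by (simp add: pat_defs)
      ultimately have m1: "hYX \<in> cedges zs" using Z(6) by (rule keep)
      show "ypat (b1+b2) c zs" unfolding ypat_def using m1 m2 cnd c1 by simp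
    qed
    then show ?thesis unfolding Good_def by blast
  qed
  show ?thesis using caseTrue caseFalse by blast
qed

lemma mergeX:
  assumes A: "GoodL a1 b c S xs" and B: "GoodL a2 b c T ys" and "0 \<in> S" "0 \<in> T"
  shows "Good (a1+a2) b c S"
proof -
  let ?v = "(int a1,0,0) :: pt"
  let ?g = "\<lambda>(p,q). (tr ?v p, tr ?v q)"
  let ?ys = "map (tr ?v) ys"
  have TT: "distinct ?ys \<and> (\<forall>e\<in>cedges ?ys. adjk e) \<and> bisL ?ys"
    using trans_tour[of ys ?v] B unfolding GoodL_def by blast
  have setys: "set ?ys = tr ?v ` board a2 b c" using B unfolding GoodL_def by simp
  have disj: "set xs \<inter> set ?ys = {}" using A setys board_x_disj unfolding GoodL_def by metis
  have un: "set xs \<union> set ?ys = board (a1+a2) b c" using A setys board_x unfolding GoodL_def by metis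
  have ce: "cedges ?ys = ?g ` cedges ys" by (simp add: cedges_map)
  have lenA: "3 \<le> length xs" using A unfolding GoodL_def by blast
  have dx: "distinct xs" and ax: "\<forall>e\<in>cedges xs. adjk e" and bx: "bisL xs" using A unfolding GoodL_def by blast+
  have ownA: "xpat a1 c xs" using A \<open>0 \<in> S\<close> unfolding GoodL_def by simp
  have ownB: "xpat a2 c ys" using B \<open>0 \<in> T\<close> unfolding GoodL_def by simp
  have caseTrue: "3 \<le> c \<Longrightarrow> Good (a1+a2) b c S"
  proof -
    assume cnd: "3 \<le> c"
    have ea: "zXZ a1 \<in> cedges xs" using ownA cnd unfolding xpat_def by simp
    have eb: "?g hXZ \<in> cedges ?ys" using ownB cnd unfolding xpat_def ce by simp
    have cr1: "adjk (fst (zXZ a1), snd (?g hXZ))" by (simp add: pat_defs adj_simp kn_def)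
    have cr2: "adjk (fst (?g hXZ), snd (zXZ a1))" by (simp add: pat_defs adj_simp kn_def)
    obtain zs where Z: "distinct zs" "set zs = set xs \<union> set ?ys" "length zs = length xs + length ?ys"
      "\<forall>e\<in>cedges zs. adjk e" "bisL zs" "cedges xs - {zXZ a1} \<subseteq> cedges zs" "cedges ?ys - {?g hXZ} \<subseteq> cedges zs"
      using assemble[OF dx _ disj _ _ ax _ bx _ cr1 cr2] TT ea eb by auto
    have "GoodL (a1+a2) b c S zs"
      unfolding GoodL_def
    proof (intro conjI impI)
      show "distinct zs" "\<forall>e\<in>cedges zs. adjk e" "bisL zs" by (fact Z(1), fact Z(4), fact Z(5))
      show "set zs = board (a1+a2) b c" using Z(2) un by simp
      show "3 \<le> length zs" using Z(3) lenA by simp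
    next
      assume "1 \<in> S"
      have "ypat b c xs" using A \<open>1 \<in> S\<close> unfolding GoodL_def by simp
      then have "ypat b c zs" unfolding ypat_def
        by (rule keep_if[OF _ _ _ _ _ Z(6)]) (simp_all add: pat_defs)
      then show "ypat b c zs" unfolding ypat_def by simp
    next
      assume "2 \<in> S"
      have "zpat b c xs" using A \<open>2 \<in> S\<close> unfolding GoodL_def by simp
      then have "zpat b c zs" unfolding zpat_def
        by (rule keep_if[OF _ _ _ _ _ Z(6)]) (simp_all add: pat_defs)
      then show "zpat b c zs" unfolding zpat_def by simp
    next
      assume "0 \<in> S"
      have "zXZ a2 \<in> cedges ys" using ownB cnd unfolding xpat_def by simp
      moreover have "?g (zXZ a2) \<noteq> ?g hXZ" by (simp add: pat_defs)
      moreover have "?g ` cedges ys - {?g hXZ} \<subseteq> cedges zs" using Z(7) unfolding ce .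
      ultimately have "?g (zXZ a2) \<in> cedges zs" by (rule keep_tr)
      moreover have "?g (zXZ a2) = zXZ (a1+a2)" by (simp add: pat_defs)
      ultimately have m2: "zXZ (a1+a2) \<in> cedges zs" by simp
      have "hXZ \<in> cedges xs" using ownA cnd unfolding xpat_def by simp
      moreover have "hXZ \<noteq> zXZ a1" by (simp add: pat_defs)
      ultimately have m1: "hXZ \<in> cedges zs" using Z(6) by (rule keep)
      show "xpat (a1+a2) c zs" unfolding xpat_def using m1 m2 cnd by simp
    qed
    then show ?thesis unfolding Good_def by blast
  qed
  have caseFalse: "\<not> 3 \<le> c \<Longrightarrow> Good (a1+a2) b c S"
  proof -
    assume cnd: "\<not> 3 \<le> c"
    have ea: "zXY a1 \<in> cedges xs" using ownA cnd unfolding xpat_def by simp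
    have eb: "?g hXY \<in> cedges ?ys" using ownB cnd unfolding xpat_def ce by simp
    have cr1: "adjk (fst (zXY a1), snd (?g hXY))" by (simp add: pat_defs adj_simp kn_def)
    have cr2: "adjk (fst (?g hXY), snd (zXY a1))" by (simp add: pat_defs adj_simp kn_def)
    obtain zs where Z: "distinct zs" "set zs = set xs \<union> set ?ys" "length zs = length xs + length ?ys"
      "\<forall>e\<in>cedges zs. adjk e" "bisL zs" "cedges xs - {zXY a1} \<subseteq> cedges zs" "cedges ?ys - {?g hXY} \<subseteq> cedges zs"
      using assemble[OF dx _ disj _ _ ax _ bx _ cr1 cr2] TT ea eb by auto
    have "GoodL (a1+a2) b c S zs"
      unfolding GoodL_def
    proof (intro conjI impI)
      show "distinct zs" "\<forall>e\<in>cedges zs. adjk e" "bisL zs" by (fact Z(1), fact Z(4), fact Z(5))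
      show "set zs = board (a1+a2) b c" using Z(2) un by simp
      show "3 \<le> length zs" using Z(3) lenA by simp
    next
      assume "1 \<in> S"
      have "ypat b c xs" using A \<open>1 \<in> S\<close> unfolding GoodL_def by simp
      then have "ypat b c zs" unfolding ypat_def
        by (rule keep_if[OF _ _ _ _ _ Z(6)]) (simp_all add: pat_defs)
      then show "ypat b c zs" unfolding ypat_def by simp
    next
      assume "2 \<in> S"
      have "zpat b c xs" using A \<open>2 \<in> S\<close> unfolding GoodL_def by simp
      then have "zpat b c zs" unfolding zpat_def
        by (rule keep_if[OF _ _ _ _ _ Z(6)]) (simp_all add: pat_defs)
      then show "zpat b c zs" unfolding zpat_def by simp
    next
      assume "0 \<in> S"
      have "zXY a2 \<in> cedges ys" using ownB cnd unfolding xpat_def by simp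
      moreover have "?g (zXY a2) \<noteq> ?g hXY" by (simp add: pat_defs)
      moreover have "?g ` cedges ys - {?g hXY} \<subseteq> cedges zs" using Z(7) unfolding ce .
      ultimately have "?g (zXY a2) \<in> cedges zs" by (rule keep_tr)
      moreover have "?g (zXY a2) = zXY (a1+a2)" by (simp add: pat_defs)
      ultimately have m2: "zXY (a1+a2) \<in> cedges zs" by simp
      have "hXY \<in> cedges xs" using ownA cnd unfolding xpat_def by simp
      moreover have "hXY \<noteq> zXY a1" by (simp add: pat_defs)
      ultimately have m1: "hXY \<in> cedges zs" using Z(6) by (rule keep)
      show "xpat (a1+a2) c zs" unfolding xpat_def using m1 m2 cnd by simp
    qed
    then show ?thesis unfolding Good_def by blast
  qed
  show ?thesis using caseTrue caseFalse by blast
qed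

lemma GmergeX: "Good a1 b c S \<Longrightarrow> Good a2 b c T \<Longrightarrow> 0 \<in> S \<Longrightarrow> 0 \<in> T \<Longrightarrow> Good (a1+a2) b c S"
  by (metis Good_def mergeX)
lemma GmergeY: "Good a b1 c S \<Longrightarrow> Good a b2 c T \<Longrightarrow> 1 \<in> S \<Longrightarrow> 1 \<in> T \<Longrightarrow> 3 \<le> b1 \<Longrightarrow> Good a (b1+b2) c S"
  by (metis Good_def mergeY)
lemma GmergeZ: "Good a b c1 S \<Longrightarrow> Good a b c2 T \<Longrightarrow> 2 \<in> S \<Longrightarrow> 2 \<in> T \<Longrightarrow> 3 \<le> c1 \<Longrightarrow> Good a b (c1+c2) S"
  by (metis Good_def mergeZ)

definition inb :: "nat \<Rightarrow> nat \<Rightarrow> nat \<Rightarrow> pt \<Rightarrow> bool" where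
  "inb a b c p = (case p of (x,y,z) \<Rightarrow> 1 \<le> x \<and> x \<le> int a \<and> 1 \<le> y \<and> y \<le> int b \<and> 1 \<le> z \<and> z \<le> int c)"
definition twoL :: "pt list" where "twoL = [(2,0,0),(-2,0,0),(0,2,0),(0,-2,0),(0,0,2),(0,0,-2)]"
definition siteW :: "pt \<times> pt \<Rightarrow> pt \<times> pt \<Rightarrow> bool" where
  "siteW e f = (let c = psub (snd e) (fst e) in kn c \<and>
     ((fst f = padd (snd f) c \<and> psub (fst f) (snd e) \<in> set twoL) \<or> (snd f = padd (fst f) c \<and> psub (fst f) (fst e) \<in> set twoL)))"
definition disj4 :: "pt \<times> pt \<Rightarrow> pt \<times> pt \<Rightarrow> pt \<times> pt \<Rightarrow> pt \<times> pt \<Rightarrow> bool" where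
  "disj4 e1 f1 e2 f2 = list_all (\<lambda>x. x \<notin> set [fst e2, snd e2, fst f2, snd f2]) [fst e1, snd e1, fst f1, snd f1]"
definition chk :: "nat \<Rightarrow> nat \<Rightarrow> nat \<Rightarrow> nat set \<Rightarrow> pt list \<Rightarrow> pt \<times> pt \<Rightarrow> pt \<times> pt \<Rightarrow> pt \<times> pt \<Rightarrow> pt \<times> pt \<Rightarrow> bool" where
  "chk a b c S xs e1 f1 e2 f2 = (length xs = a*b*c \<and> 3 \<le> length xs \<and> distinct xs \<and> list_all (inb a b c) xs \<and>
     list_all (\<lambda>e. kn (psub (snd e) (fst e))) (zip xs (rotate1 xs)) \<and>
     e1 \<in> cedges xs \<and> f1 \<in> cedges xs \<and> e2 \<in> cedges xs \<and> f2 \<in> cedges xs \<and>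
     siteW e1 f1 \<and> siteW e2 f2 \<and> disj4 e1 f1 e2 f2 \<and>
     (0 \<in> S \<longrightarrow> xpat a c xs) \<and> (1 \<in> S \<longrightarrow> ypat b c xs) \<and> (2 \<in> S \<longrightarrow> zpat b c xs))"

lemma board_prod: "board a b c = {1..int a} \<times> {1..int b} \<times> {1..int c}"
  unfolding board_def by auto
lemma card_board: "card (board a b c) = a*b*c"
  unfolding board_prod by (simp add: card_cartesian_product)

lemma two_ex: assumes "v \<in> set twoL" shows "\<exists>i<3. v \<in> {psmul 2 (ebas i), psmul (-2) (ebas i)}"
proof -
  have "v \<in> {psmul 2 (ebas 0), psmul (-2) (ebas 0)} \<or> v \<in> {psmul 2 (ebas 1), psmul (-2) (ebas 1)} \<or>
        v \<in> {psmul 2 (ebas 2), psmul (-2) (ebas 2)}" using assms by (auto simp: twoL_def)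
  then consider "v \<in> {psmul 2 (ebas 0), psmul (-2) (ebas 0)}" | "v \<in> {psmul 2 (ebas 1), psmul (-2) (ebas 1)}"
     | "v \<in> {psmul 2 (ebas 2), psmul (-2) (ebas 2)}" by blast
  then show ?thesis
  proof cases
    case 1 then show ?thesis by (intro exI[of _ 0]) simp
  next
    case 2 then show ?thesis by (intro exI[of _ 1]) simp
  next
    case 3 then show ?thesis by (intro exI[of _ 2]) simp
  qed
qed

lemma siteW_E: assumes "siteW e f" shows "siteE e f"
proof -
  obtain p q where e: "e = (p,q)" by (cases e)
  obtain r s where f: "f = (r,s)" by (cases f)
  define c where "c = psub q p"
  have kc: "c \<in> knight_moves" using assms unfolding siteW_def e f c_def knight_iff by (simp add: Let_def)
  have q: "q = padd p c" unfolding c_def by (cases p; cases q) simp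
  have W: "(r = padd s c \<and> psub r q \<in> set twoL) \<or> (s = padd r c \<and> psub r p \<in> set twoL)"
    using assms unfolding siteW_def e f c_def by (simp add: Let_def)
  then show ?thesis
  proof
    assume h: "r = padd s c \<and> psub r q \<in> set twoL"
    obtain i where i: "i < 3" "psub r q \<in> {psmul 2 (ebas i), psmul (-2) (ebas i)}" using two_ex h by blast
    have eq: "psub r q = psub s p" using h q by (cases p; cases s; cases c) simp
    show ?thesis unfolding siteE_def Let_def e f fst_conv snd_conv
      apply (rule bexI[OF _ kc], rule exI[of _ i])
      using i eq h q by blast
  next
    assume h: "s = padd r c \<and> psub r p \<in> set twoL"
    obtain i where i: "i < 3" "psub r p \<in> {psmul 2 (ebas i), psmul (-2) (ebas i)}" using two_ex h by blast
    have eq: "psub r p = psub s q" using h q by (cases p; cases r; cases c) simp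
    show ?thesis unfolding siteE_def Let_def e f fst_conv snd_conv
      apply (rule bexI[OF _ kc], rule exI[of _ i])
      using i eq h q by blast
  qed
qed

lemma chk_ok: assumes "chk a b c S xs e1 f1 e2 f2" shows "Good a b c S"
proof -
  have C: "length xs = a*b*c" "3 \<le> length xs" "distinct xs" "list_all (inb a b c) xs"
     "list_all (\<lambda>e. kn (psub (snd e) (fst e))) (zip xs (rotate1 xs))"
     "e1 \<in> cedges xs" "f1 \<in> cedges xs" "e2 \<in> cedges xs" "f2 \<in> cedges xs"
     "siteW e1 f1" "siteW e2 f2" "disj4 e1 f1 e2 f2"
     "0 \<in> S \<longrightarrow> xpat a c xs" "1 \<in> S \<longrightarrow> ypat b c xs" "2 \<in> S \<longrightarrow> zpat b c xs"
    using assms unfolding chk_def by blast+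
  have sub: "set xs \<subseteq> board a b c" using C(4) unfolding list_all_iff inb_def board_def by auto
  have "card (set xs) = card (board a b c)" using C(1,3) card_board distinct_card by metis
  then have se: "set xs = board a b c" using sub card_subset_eq
    by (metis board_prod finite_SigmaI finite_atLeastAtMost_int)
  have ad: "\<forall>e\<in>cedges xs. adjk e" using C(5) unfolding list_all_iff cedges_def adjk_def knight_iff by blast
  have "supp e1 f1 \<inter> supp e2 f2 = {}" using C(12) unfolding disj4_def supp_def by auto
  then have "bisL xs" unfolding bisL_def using C(6-11) siteW_E by blast
  then show ?thesis unfolding Good_def GoodL_def using C se ad by blast
qed

definition goodT :: "nat \<Rightarrow> nat \<Rightarrow> nat \<Rightarrow> bool" where
  "goodT a b c \<longleftrightarrow> 2 \<le> a \<and> 2 \<le> b \<and> 2 \<le> c \<and> ((3 \<le> a \<and> 3 \<le> b) \<or> (3 \<le> a \<and> 3 \<le> c) \<or> (3 \<le> b \<and> 3 \<le> c)) \<and>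
     (4 \<le> a \<or> 4 \<le> b \<or> 4 \<le> c) \<and> (even a \<or> even b \<or> even c)"

definition NS :: "nat \<Rightarrow> nat \<Rightarrow> nat \<Rightarrow> nat set" where
  "NS a b c = (if a \<le> 7 \<and> b \<le> 7 \<and> c \<le> 7 \<and> a \<noteq> 4 \<and> b \<noteq> 4 \<and> c \<noteq> 4
     then {i. (i = 0 \<and> 4 \<le> a) \<or> (i = 1 \<and> 4 \<le> b) \<or> (i = 2 \<and> 4 \<le> c)} else {0,1,2})"




lemma A_2_3_4: "Good 2 3 4 {0,1,2}"
  by (rule chk_ok[of 2 3 4 "{0,1,2}" "[(2,1,3),(1,1,1),(1,3,2),(1,2,4),(1,1,2),(1,3,3),(2,3,1),(2,1,2),(1,1,4),(1,2,2),(2,2,4),(2,3,2),(1,3,4),(1,1,3),(1,2,1),(2,2,3),(2,1,1),(1,3,1),(1,2,3),(2,2,1),(2,3,3),(2,1,4),(2,2,2),(2,3,4)]" "((1,1,1),(1,3,2))" "((1,3,4),(1,1,3))" "((2,3,1),(2,1,2))" "((2,3,3),(2,1,4))"]) code_simp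

lemma A_2_3_5: "Good 2 3 5 {0,1,2}"
  by (rule chk_ok[of 2 3 5 "{0,1,2}" "[(2,1,3),(1,1,1),(1,3,2),(1,2,4),(2,2,2),(2,3,4),(2,1,5),(1,3,5),(1,1,4),(1,2,2),(2,2,4),(2,3,2),(1,3,4),(1,1,5),(2,3,5),(2,1,4),(1,1,2),(1,3,1),(2,1,1),(1,1,3),(1,2,1),(2,2,3),(1,2,5),(1,3,3),(2,3,1),(2,1,2),(2,3,3),(2,2,1),(1,2,3),(2,2,5)]" "((2,3,5),(2,1,4))" "((2,1,2),(2,3,3))" "((2,1,1),(1,1,3))" "((1,3,3),(2,3,1))"]) code_simp

lemma A_2_3_6: "Good 2 3 6 {2}"
  by (rule chk_ok[of 2 3 6 "{2}" "[(1,1,1),(1,3,2),(2,1,2),(2,3,1),(2,2,3),(1,2,5),(1,1,3),(1,2,1),(1,3,3),(2,3,5),(1,1,5),(1,3,6),(2,1,6),(2,2,4),(1,2,6),(1,1,4),(1,2,2),(1,3,4),(2,3,2),(2,1,1),(1,3,1),(1,1,2),(2,1,4),(2,2,6),(2,3,4),(2,2,2),(1,2,4),(1,1,6),(2,3,6),(2,1,5),(1,3,5),(2,3,3),(2,2,5),(2,1,3),(2,2,1),(1,2,3)]" "((2,3,1),(2,2,3))" "((2,3,3),(2,2,5))" "((1,2,5),(1,1,3))" "((1,2,3),(1,1,1))"]) code_simp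

lemma A_2_3_7: "Good 2 3 7 {2}"
  by (rule chk_ok[of 2 3 7 "{2}" "[(1,1,1),(1,3,2),(2,1,2),(2,3,1),(2,2,3),(1,2,1),(1,1,3),(2,1,1),(1,3,1),(2,3,3),(2,2,1),(1,2,3),(2,2,5),(1,2,7),(1,3,5),(2,3,7),(2,1,6),(1,1,4),(1,2,2),(2,2,4),(1,2,6),(1,3,4),(2,3,2),(1,1,2),(1,3,3),(2,3,5),(1,3,7),(2,1,7),(2,3,6),(1,1,6),(2,1,4),(2,2,2),(1,2,4),(2,2,6),(2,3,4),(2,1,5),(2,2,7),(1,2,5),(1,1,7),(1,3,6),(1,1,5),(2,1,3)]" "((2,2,3),(1,2,1))" "((1,2,3),(2,2,5))" "((1,1,3),(2,1,1))" "((1,1,5),(2,1,3))"]) code_simp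

lemma A_2_4_3: "Good 2 4 3 {0,1,2}"
  by (rule chk_ok[of 2 4 3 "{0,1,2}" "[(2,1,3),(1,1,1),(1,3,2),(1,1,3),(2,1,1),(2,3,2),(1,1,2),(1,3,3),(1,2,1),(2,2,3),(2,4,2),(1,2,2),(1,4,3),(2,4,1),(2,2,2),(1,4,2),(1,2,3),(1,3,1),(2,3,3),(2,1,2),(2,3,1),(2,4,3),(1,4,1),(2,2,1)]" "((2,1,3),(1,1,1))" "((1,3,1),(2,3,3))" "((1,2,1),(2,2,3))" "((2,4,3),(1,4,1))"]) code_simp

lemma A_2_4_4: "Good 2 4 4 {0,1,2}"
  by (rule chk_ok[of 2 4 4 "{0,1,2}" "[(2,1,3),(1,1,1),(1,3,2),(1,4,4),(2,2,4),(2,1,2),(2,3,1),(2,4,3),(1,2,3),(2,2,1),(1,4,1),(1,3,3),(1,1,4),(1,2,2),(1,4,3),(2,4,1),(2,3,3),(1,3,1),(2,1,1),(1,1,3),(1,3,4),(2,3,2),(1,1,2),(2,1,4),(2,2,2),(1,2,4),(2,4,4),(1,4,2),(1,2,1),(2,2,3),(2,4,2),(2,3,4)]" "((2,1,3),(1,1,1))" "((2,3,3),(1,3,1))" "((1,2,3),(2,2,1))" "((1,4,3),(2,4,1))"]) code_simp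

lemma A_2_4_5: "Good 2 4 5 {0,1,2}"
  by (rule chk_ok[of 2 4 5 "{0,1,2}" "[(2,1,3),(1,1,1),(1,3,2),(2,1,2),(1,1,4),(2,3,4),(2,1,5),(1,3,5),(1,2,3),(1,1,5),(2,3,5),(2,1,4),(1,3,4),(1,4,2),(2,2,2),(1,2,4),(2,4,4),(2,2,5),(1,4,5),(2,4,3),(2,3,1),(1,3,3),(1,4,1),(2,2,1),(2,3,3),(2,4,5),(1,4,3),(2,4,1),(1,2,1),(2,2,3),(2,4,2),(1,2,2),(2,2,4),(1,4,4),(1,2,5),(1,1,3),(2,1,1),(1,3,1),(1,1,2),(2,3,2)]" "((1,3,2),(2,1,2))" "((2,1,4),(1,3,4))" "((1,1,4),(2,3,4))" "((1,1,2),(2,3,2))"]) code_simp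

lemma A_2_5_3: "Good 2 5 3 {0,1,2}"
  by (rule chk_ok[of 2 5 3 "{0,1,2}" "[(2,1,3),(1,1,1),(1,3,2),(2,5,2),(2,3,3),(2,1,2),(2,3,1),(1,5,1),(2,5,3),(2,4,1),(2,2,2),(1,4,2),(1,2,3),(2,4,3),(1,4,1),(1,5,3),(2,5,1),(2,3,2),(1,1,2),(1,3,3),(1,5,2),(1,3,1),(2,1,1),(1,1,3),(1,2,1),(2,2,3),(1,4,3),(1,2,2),(2,4,2),(2,2,1)]" "((1,1,1),(1,3,2))" "((1,5,2),(1,3,1))" "((2,1,2),(2,3,1))" "((2,5,1),(2,3,2))"]) code_simp

lemma A_2_5_4: "Good 2 5 4 {0,1,2}"
  by (rule chk_ok[of 2 5 4 "{0,1,2}" "[(2,1,3),(1,1,1),(1,3,2),(1,5,1),(2,3,1),(2,1,2),(1,1,4),(1,2,2),(2,2,4),(1,4,4),(2,4,2),(2,5,4),(1,5,2),(1,3,3),(1,5,4),(2,5,2),(2,4,4),(1,2,4),(1,1,2),(2,1,4),(1,3,4),(1,4,2),(1,2,1),(2,2,3),(1,4,3),(2,4,1),(2,2,2),(2,4,3),(1,2,3),(2,2,1),(1,4,1),(1,5,3),(2,5,1),(1,3,1),(2,3,3),(1,1,3),(2,1,1),(2,3,2),(2,5,3),(2,3,4)]" "((2,1,3),(1,1,1))" "((1,3,1),(2,3,3))" "((1,1,4),(1,2,2))" "((1,3,4),(1,4,2))"]) code_simp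

lemma A_2_5_5: "Good 2 5 5 {1,2}"
  by (rule chk_ok[of 2 5 5 "{1,2}" "[(2,1,3),(1,1,1),(1,3,2),(1,5,1),(2,3,1),(2,1,2),(1,1,4),(2,3,4),(1,5,4),(2,5,2),(2,4,4),(1,2,4),(2,2,2),(1,4,2),(1,2,1),(2,4,1),(2,5,3),(1,5,5),(1,4,3),(2,4,5),(1,2,5),(2,2,3),(2,1,5),(1,3,5),(2,5,5),(1,5,3),(2,5,1),(1,3,1),(2,1,1),(1,1,3),(2,3,3),(2,2,5),(1,4,5),(2,4,3),(1,2,3),(2,2,1),(1,4,1),(1,3,3),(2,3,5),(2,1,4),(1,1,2),(2,3,2),(1,5,2),(1,4,4),(2,2,4),(1,2,2),(2,4,2),(2,5,4),(1,3,4),(1,1,5)]" "((1,5,1),(2,3,1))" "((1,3,1),(2,1,1))" "((1,1,4),(2,3,4))" "((1,1,2),(2,3,2))"]) code_simp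

lemma A_2_6_3: "Good 2 6 3 {1,2}"
  by (rule chk_ok[of 2 6 3 "{1,2}" "[(2,1,3),(1,1,1),(1,3,2),(2,5,2),(2,3,3),(2,1,2),(2,3,1),(1,5,1),(1,6,3),(2,6,1),(2,5,3),(1,3,3),(1,1,2),(2,3,2),(1,5,2),(1,3,1),(2,1,1),(1,1,3),(1,2,1),(2,2,3),(1,4,3),(1,2,2),(2,4,2),(1,6,2),(1,4,1),(1,5,3),(2,5,1),(2,6,3),(1,6,1),(2,4,1),(2,2,2),(1,4,2),(2,6,2),(2,4,3),(1,2,3),(2,2,1)]" "((1,1,1),(1,3,2))" "((1,5,2),(1,3,1))" "((1,2,2),(2,4,2))" "((1,4,2),(2,6,2))"]) code_simp

lemma A_2_7_3: "Good 2 7 3 {0,1,2}"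
  by (rule chk_ok[of 2 7 3 "{0,1,2}" "[(2,1,3),(1,1,1),(1,3,2),(1,1,3),(2,1,1),(2,3,2),(1,1,2),(1,3,1),(1,2,3),(2,2,1),(2,3,3),(2,1,2),(2,3,1),(2,5,2),(1,7,2),(1,5,3),(2,7,3),(1,7,1),(2,5,1),(2,7,2),(1,5,2),(1,7,3),(2,7,1),(2,6,3),(1,6,1),(1,4,2),(2,2,2),(2,4,3),(2,6,2),(2,4,1),(1,2,1),(2,2,3),(2,4,2),(1,6,2),(1,4,3),(1,2,2),(1,4,1),(2,6,1),(1,6,3),(1,5,1),(2,5,3),(1,3,3)]" "((2,1,1),(2,3,2))" "((2,3,1),(2,5,2))" "((1,5,3),(2,7,3))" "((2,5,3),(1,3,3))"]) code_simp

lemma A_3_2_4: "Good 3 2 4 {0,1,2}"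
  by (rule chk_ok[of 3 2 4 "{0,1,2}" "[(2,1,3),(1,1,1),(1,2,3),(2,2,1),(3,2,3),(1,2,4),(2,2,2),(2,1,4),(1,1,2),(3,2,2),(2,2,4),(2,1,2),(3,1,4),(1,1,3),(2,1,1),(3,1,3),(1,1,4),(3,2,4),(3,1,2),(1,2,2),(3,2,1),(2,2,3),(1,2,1),(3,1,1)]" "((3,2,3),(1,2,4))" "((1,2,2),(3,2,1))" "((1,1,2),(3,2,2))" "((1,1,4),(3,2,4))"]) code_simp

lemma A_3_2_5: "Good 3 2 5 {0,1,2}"
  by (rule chk_ok[of 3 2 5 "{0,1,2}" "[(2,1,3),(1,1,1),(3,1,2),(2,1,4),(2,2,2),(3,2,4),(1,2,5),(3,1,5),(1,1,4),(2,1,2),(2,2,4),(1,2,2),(3,2,1),(2,2,3),(2,1,5),(1,1,3),(2,1,1),(3,1,3),(3,2,5),(1,2,4),(1,1,2),(3,1,1),(1,2,1),(3,2,2),(3,1,4),(1,1,5),(1,2,3),(2,2,1),(3,2,3),(2,2,5)]" "((2,1,3),(1,1,1))" "((2,1,5),(1,1,3))" "((3,2,1),(2,2,3))" "((3,2,3),(2,2,5))"]) code_simp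

lemma A_3_2_6: "Good 3 2 6 {0,2}"
  by (rule chk_ok[of 3 2 6 "{0,2}" "[(2,1,3),(1,1,1),(3,1,2),(1,2,2),(3,2,1),(2,2,3),(2,1,1),(3,1,3),(2,1,5),(1,1,3),(1,2,1),(3,1,1),(1,1,2),(3,2,2),(2,2,4),(2,1,2),(3,1,4),(2,1,6),(1,1,4),(3,1,5),(1,1,6),(3,2,6),(1,2,5),(3,2,4),(2,2,2),(2,1,4),(2,2,6),(1,2,4),(3,2,5),(1,2,6),(3,1,6),(1,1,5),(1,2,3),(2,2,1),(3,2,3),(2,2,5)]" "((2,1,3),(1,1,1))" "((2,1,5),(1,1,3))" "((3,2,1),(2,2,3))" "((3,2,3),(2,2,5))"]) code_simp

lemma A_3_2_7: "Good 3 2 7 {2}"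
  by (rule chk_ok[of 3 2 7 "{2}" "[(1,2,2),(3,2,1),(1,1,1),(3,1,2),(2,1,4),(2,2,2),(3,2,4),(2,2,6),(1,2,4),(1,1,2),(3,1,1),(1,2,1),(3,2,2),(2,2,4),(2,1,2),(1,1,4),(2,1,6),(3,1,4),(3,2,6),(1,1,6),(3,1,7),(1,2,7),(2,2,5),(1,2,3),(2,2,1),(2,1,3),(1,1,5),(2,1,7),(3,1,5),(3,2,7),(1,2,6),(3,1,6),(1,1,7),(2,1,5),(2,2,7),(3,2,5),(3,1,3),(2,1,1),(2,2,3),(1,2,5),(1,1,3),(3,2,3)]" "((3,2,1),(1,1,1))" "((1,1,3),(3,2,3))" "((3,1,2),(2,1,4))" "((2,1,6),(3,1,4))"]) code_simp

lemma A_3_3_4: "Good 3 3 4 {0,1,2}"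
  by (rule chk_ok[of 3 3 4 "{0,1,2}" "[(2,1,3),(1,1,1),(1,3,2),(3,3,1),(2,1,1),(2,2,3),(1,2,1),(3,1,1),(1,1,2),(2,3,2),(2,2,4),(3,2,2),(3,3,4),(1,2,4),(2,2,2),(2,1,4),(3,1,2),(3,2,4),(1,3,4),(3,3,3),(1,2,3),(2,2,1),(3,2,3),(1,1,3),(2,3,3),(1,3,1),(3,2,1),(3,1,3),(1,1,4),(1,2,2),(3,3,2),(1,3,3),(2,3,1),(2,1,2),(3,1,4),(2,3,4)]" "((2,1,3),(1,1,1))" "((2,3,3),(1,3,1))" "((1,3,2),(3,3,1))" "((3,1,1),(1,1,2))"]) code_simp

lemma A_3_3_6: "Good 3 3 6 {0,1,2}"
  by (rule chk_ok[of 3 3 6 "{0,1,2}" "[(2,1,3),(1,1,1),(1,3,2),(3,3,1),(2,1,1),(2,3,2),(3,1,2),(1,2,2),(3,2,1),(1,3,1),(3,3,2),(3,1,1),(1,2,1),(2,2,3),(1,2,5),(1,1,3),(2,3,3),(2,2,1),(3,2,3),(2,2,5),(1,2,3),(3,2,2),(2,2,4),(2,1,2),(3,1,4),(2,1,6),(1,3,6),(3,2,6),(1,1,6),(2,3,6),(2,1,5),(3,3,5),(3,1,6),(1,1,5),(2,3,5),(3,1,5),(3,3,6),(2,3,4),(2,2,6),(3,2,4),(2,2,2),(2,1,4),(1,3,4),(1,2,6),(1,1,4),(3,1,3),(3,2,5),(1,3,5),(3,3,4),(1,2,4),(1,1,2),(1,3,3),(2,3,1),(3,3,3)]" "((1,1,1),(1,3,2))"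 "((3,3,2),(3,1,1))" "((3,3,1),(2,1,1))" "((3,3,3),(2,1,3))"]) code_simp

lemma A_3_4_2: "Good 3 4 2 {0,1,2}"
  by (rule chk_ok[of 3 4 2 "{0,1,2}" "[(1,1,1),(1,3,2),(3,4,2),(2,2,2),(1,4,2),(3,3,2),(2,1,2),(2,3,1),(3,1,1),(1,1,2),(2,3,2),(2,1,1),(1,3,1),(3,4,1),(3,2,2),(2,4,2),(2,2,1),(1,4,1),(1,2,2),(3,1,2),(3,3,1),(1,2,1),(2,4,1),(3,2,1)]" "((1,4,2),(3,3,2))" "((1,2,2),(3,1,2))" "((1,3,1),(3,4,1))" "((3,2,1),(1,1,1))"]) code_simp

lemma A_3_4_3: "Good 3 4 3 {0,1,2}"
  by (rule chk_ok[of 3 4 3 "{0,1,2}" "[(2,1,3),(1,1,1),(1,3,2),(1,1,3),(3,1,2),(2,3,2),(2,1,1),(3,3,1),(2,3,3),(2,1,2),(3,3,2),(3,1,3),(1,1,2),(3,1,1),(2,3,1),(3,3,3),(1,2,3),(1,3,1),(3,2,1),(2,2,3),(1,4,3),(2,4,1),(1,2,1),(1,4,2),(2,2,2),(3,4,2),(1,4,1),(2,4,3),(3,4,1),(2,2,1),(3,2,3),(1,2,2),(2,4,2),(3,2,2),(3,4,3),(1,3,3)]" "((1,3,2),(1,1,3))" "((3,3,2),(3,1,3))" "((3,2,1),(2,2,3))" "((2,4,3),(3,4,1))"]) code_simp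

lemma A_3_4_4: "Good 3 4 4 {0,1,2}"
  by (rule chk_ok[of 3 4 4 "{0,1,2}" "[(2,1,3),(1,1,1),(1,3,2),(1,4,4),(2,4,2),(3,4,4),(2,2,4),(2,1,2),(1,1,4),(3,2,4),(2,4,4),(2,3,2),(3,1,2),(2,1,4),(1,3,4),(1,2,2),(1,4,1),(2,2,1),(3,2,3),(2,4,3),(3,4,1),(1,4,2),(2,2,2),(3,4,2),(3,3,4),(1,2,4),(1,4,3),(2,4,1),(3,4,3),(2,2,3),(3,2,1),(3,3,3),(2,3,1),(3,1,1),(1,2,1),(3,3,1),(2,1,1),(1,1,3),(2,3,3),(3,1,3),(1,2,3),(1,3,1),(3,3,2),(1,3,3),(1,1,2),(3,2,2),(3,1,4),(2,3,4)]" "((3,4,4),(2,2,4))" "((2,2,2),(3,4,2))" "((1,1,4),(3,2,4))" "((1,1,2),(3,2,2))"]) code_simp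

lemma A_3_5_2: "Good 3 5 2 {0,1,2}"
  by (rule chk_ok[of 3 5 2 "{0,1,2}" "[(1,1,1),(1,3,2),(2,1,2),(2,3,1),(2,5,2),(3,3,2),(3,1,1),(1,1,2),(3,2,2),(1,2,1),(2,4,1),(2,2,2),(1,4,2),(3,5,2),(1,5,1),(3,4,1),(2,2,1),(2,4,2),(1,2,2),(3,1,2),(3,3,1),(2,5,1),(2,3,2),(2,1,1),(1,3,1),(1,5,2),(3,5,1),(1,4,1),(3,4,2),(3,2,1)]" "((1,1,1),(1,3,2))" "((3,3,2),(3,1,1))" "((2,1,2),(2,3,1))" "((2,5,1),(2,3,2))"]) code_simp

lemma A_3_6_2: "Good 3 6 2 {1}"
  by (rule chk_ok[of 3 6 2 "{1}" "[(3,2,1),(1,1,1),(3,1,2),(1,2,2),(2,4,2),(2,2,1),(1,4,1),(2,6,1),(3,4,1),(3,2,2),(1,1,2),(3,1,1),(1,2,1),(2,4,1),(2,2,2),(1,4,2),(2,6,2),(3,4,2),(1,5,2),(3,6,2),(1,6,1),(3,5,1),(2,3,1),(2,1,2),(3,3,2),(2,5,2),(1,3,2),(1,5,1),(3,6,1),(1,6,2),(3,5,2),(2,3,2),(2,5,1),(3,3,1),(2,1,1),(1,3,1)]" "((1,2,2),(2,4,2))" "((1,4,2),(2,6,2))" "((1,4,1),(2,6,1))" "((1,2,1),(2,4,1))"]) code_simp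

lemma A_3_6_3: "Good 3 6 3 {0,1,2}"
  by (rule chk_ok[of 3 6 3 "{0,1,2}" "[(2,1,3),(1,1,1),(1,3,2),(2,5,2),(3,3,2),(3,1,1),(1,1,2),(3,1,3),(2,1,1),(1,1,3),(3,1,2),(2,3,2),(3,5,2),(1,6,2),(3,6,1),(2,6,3),(1,6,1),(1,5,3),(2,5,1),(3,3,1),(1,2,1),(3,2,2),(2,4,2),(2,2,3),(3,4,3),(3,6,2),(1,5,2),(3,5,1),(3,6,3),(3,4,2),(2,6,2),(1,4,2),(2,2,2),(2,4,1),(3,2,1),(1,2,2),(1,4,1),(1,3,3),(2,5,3),(1,5,1),(1,4,3),(3,5,3),(1,6,3),(2,6,1),(3,4,1),(2,2,1),(3,2,3),(2,4,3),(1,2,3),(1,3,1),(2,3,3),(2,1,2),(2,3,1),(3,3,3)]" "((2,1,3),(1,1,1))" "((1,3,1),(2,3,3))" "((2,5,2),(3,3,2))" "((3,1,2),(2,3,2))"]) code_simp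

lemma A_3_7_2: "Good 3 7 2 {1}"
  by (rule chk_ok[of 3 7 2 "{1}" "[(3,2,1),(1,1,1),(3,1,2),(1,2,2),(2,4,2),(2,2,1),(1,4,1),(2,6,1),(3,4,1),(3,2,2),(1,1,2),(3,1,1),(1,2,1),(2,4,1),(2,2,2),(1,4,2),(2,6,2),(3,4,2),(3,6,1),(1,6,2),(3,7,2),(1,7,1),(1,5,2),(2,7,2),(3,5,2),(2,3,2),(2,1,1),(3,3,1),(2,5,1),(3,7,1),(1,6,1),(3,6,2),(1,7,2),(2,5,2),(1,3,2),(2,1,2),(2,3,1),(1,5,1),(2,7,1),(3,5,1),(3,3,2),(1,3,1)]" "((1,1,1),(3,1,2))" "((3,3,2),(1,3,1))" "((1,2,2),(2,4,2))" "((1,4,2),(2,6,2))"]) code_simp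

lemma A_4_2_3: "Good 4 2 3 {0,1,2}"
  by (rule chk_ok[of 4 2 3 "{0,1,2}" "[(2,1,3),(1,1,1),(3,1,2),(1,1,3),(3,2,3),(1,2,2),(3,2,1),(4,2,3),(2,2,2),(4,1,2),(2,1,1),(4,2,1),(4,1,3),(3,1,1),(1,1,2),(3,2,2),(1,2,1),(2,2,3),(4,2,2),(2,1,2),(4,1,1),(3,1,3),(1,2,3),(2,2,1)]" "((2,1,3),(1,1,1))" "((4,1,3),(3,1,1))" "((3,2,1),(4,2,3))" "((1,2,1),(2,2,3))"]) code_simp

lemma A_4_2_4: "Good 4 2 4 {0,1,2}"
  by (rule chk_ok[of 4 2 4 "{0,1,2}" "[(2,1,3),(1,1,1),(1,2,3),(2,2,1),(4,1,1),(3,1,3),(1,1,4),(2,1,2),(4,2,2),(3,2,4),(3,1,2),(4,1,4),(2,2,4),(1,2,2),(3,2,1),(4,2,3),(2,2,2),(1,2,4),(1,1,2),(2,1,4),(4,2,4),(3,2,2),(3,1,4),(4,1,2),(2,1,1),(4,2,1),(4,1,3),(2,2,3),(1,2,1),(1,1,3),(3,2,3),(3,1,1)]" "((1,1,1),(1,2,3))" "((3,2,3),(3,1,1))" "((2,2,1),(4,1,1))" "((4,1,3),(2,2,3))"]) code_simp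

lemma A_4_2_5: "Good 4 2 5 {0,1,2}"
  by (rule chk_ok[of 4 2 5 "{0,1,2}" "[(2,1,3),(1,1,1),(1,2,3),(2,2,1),(4,1,1),(2,1,2),(4,2,2),(4,1,4),(3,1,2),(1,2,2),(3,2,1),(4,2,3),(2,2,4),(4,2,5),(2,1,5),(1,1,3),(1,2,1),(3,1,1),(4,1,3),(3,1,5),(1,2,5),(3,2,4),(1,1,4),(3,1,3),(4,1,5),(2,2,5),(3,2,3),(4,2,1),(2,1,1),(2,2,3),(3,2,5),(1,2,4),(2,2,2),(4,1,2),(4,2,4),(2,1,4),(1,1,2),(3,2,2),(3,1,4),(1,1,5)]" "((2,1,3),(1,1,1))" "((2,1,5),(1,1,3))" "((1,2,3),(2,2,1))" "((3,2,3),(4,2,1))"]) code_simp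

lemma A_4_3_2: "Good 4 3 2 {0,1,2}"
  by (rule chk_ok[of 4 3 2 "{0,1,2}" "[(1,1,1),(1,3,2),(3,2,2),(1,2,1),(3,3,1),(4,1,1),(2,2,1),(4,2,2),(2,1,2),(2,3,1),(4,2,1),(2,2,2),(4,3,2),(3,1,2),(1,2,2),(3,3,2),(4,1,2),(4,3,1),(3,1,1),(1,1,2),(2,3,2),(2,1,1),(1,3,1),(3,2,1)]" "((3,3,1),(4,1,1))" "((2,1,1),(1,3,1))" "((2,1,2),(2,3,1))" "((4,1,2),(4,3,1))"]) code_simp

lemma A_4_3_3: "Good 4 3 3 {0,1,2}"
  by (rule chk_ok[of 4 3 3 "{0,1,2}" "[(2,1,3),(1,1,1),(1,3,2),(3,2,2),(1,1,2),(1,3,1),(1,2,3),(2,2,1),(4,2,2),(2,3,2),(4,3,1),(3,1,1),(1,2,1),(1,3,3),(2,3,1),(3,3,3),(4,1,3),(2,2,3),(3,2,1),(4,2,3),(2,2,2),(4,2,1),(4,3,3),(3,3,1),(3,2,3),(1,2,2),(3,1,2),(1,1,3),(2,1,1),(3,1,3),(4,1,1),(4,3,2),(2,3,3),(2,1,2),(3,3,2),(4,1,2)]" "((1,3,1),(1,2,3))" "((3,3,1),(3,2,3))" "((1,3,3),(2,3,1))" "((1,1,3),(2,1,1))"]) code_simp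

lemma A_4_4_2: "Good 4 4 2 {0,1,2}"
  by (rule chk_ok[of 4 4 2 "{0,1,2}" "[(1,1,1),(1,3,2),(3,4,2),(1,4,1),(3,3,1),(4,1,1),(2,2,1),(4,2,2),(2,1,2),(3,3,2),(1,2,2),(3,1,2),(4,3,2),(2,4,2),(4,4,1),(2,3,1),(3,1,1),(1,2,1),(1,4,2),(2,2,2),(4,1,2),(4,3,1),(2,4,1),(4,4,2),(3,2,2),(1,1,2),(2,3,2),(2,1,1),(4,2,1),(3,4,1),(1,3,1),(3,2,1)]" "((1,3,2),(3,4,2))" "((3,2,2),(1,1,2))" "((1,4,1),(3,3,1))" "((3,1,1),(1,2,1))"]) code_simp

lemma A_4_5_2: "Good 4 5 2 {0,1,2}"
  by (rule chk_ok[of 4 5 2 "{0,1,2}" "[(1,1,1),(1,3,2),(1,5,1),(3,4,1),(4,2,1),(4,4,2),(3,2,2),(1,1,2),(3,1,1),(1,2,1),(1,4,2),(3,5,2),(2,3,2),(2,1,1),(4,1,2),(4,3,1),(2,4,1),(4,5,1),(2,5,2),(2,3,1),(3,5,1),(1,5,2),(1,3,1),(2,5,1),(3,3,1),(1,4,1),(2,2,1),(4,1,1),(2,1,2),(4,2,2),(3,4,2),(2,2,2),(4,3,2),(3,1,2),(1,2,2),(3,3,2),(4,5,2),(2,4,2),(4,4,1),(3,2,1)]" "((1,1,1),(1,3,2))" "((1,5,2),(1,3,1))" "((3,4,1),(4,2,1))" "((1,4,1),(2,2,1))"]) code_simp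

lemma A_5_2_3: "Good 5 2 3 {0,1,2}"
  by (rule chk_ok[of 5 2 3 "{0,1,2}" "[(2,1,3),(1,1,1),(1,2,3),(2,2,1),(4,2,2),(2,1,2),(4,1,1),(5,1,3),(5,2,1),(4,2,3),(2,2,2),(4,2,1),(5,2,3),(5,1,1),(4,1,3),(2,2,3),(1,2,1),(3,2,2),(1,1,2),(3,1,3),(5,1,2),(3,1,1),(3,2,3),(1,2,2),(3,2,1),(5,2,2),(3,1,2),(1,1,3),(2,1,1),(4,1,2)]" "((1,1,1),(1,2,3))" "((3,1,1),(3,2,3))" "((1,2,1),(3,2,2))" "((3,2,1),(5,2,2))"]) code_simp

lemma A_5_2_4: "Good 5 2 4 {0,1,2}"
  by (rule chk_ok[of 5 2 4 "{0,1,2}" "[(2,1,3),(1,1,1),(1,2,3),(2,2,1),(4,1,1),(5,1,3),(5,2,1),(4,2,3),(2,2,4),(4,1,4),(5,1,2),(5,2,4),(4,2,2),(2,1,2),(3,1,4),(4,1,2),(5,1,4),(3,2,4),(2,2,2),(1,2,4),(1,1,2),(2,1,4),(4,2,4),(3,2,2),(1,2,1),(1,1,3),(2,1,1),(3,1,3),(1,1,4),(1,2,2),(3,2,1),(2,2,3),(4,1,3),(4,2,1),(5,2,3),(5,1,1),(3,1,2),(5,2,2),(3,2,3),(3,1,1)]" "((1,1,1),(1,2,3))" "((3,2,3),(3,1,1))" "((2,2,1),(4,1,1))" "((2,2,3),(4,1,3))"]) code_simp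

lemma A_5_2_5: "Good 5 2 5 {0,2}"
  by (rule chk_ok[of 5 2 5 "{0,2}" "[(2,1,3),(1,1,1),(1,2,3),(2,2,1),(4,1,1),(5,1,3),(5,2,1),(4,2,3),(5,2,5),(3,1,5),(1,2,5),(1,1,3),(2,1,1),(4,2,1),(5,2,3),(5,1,5),(3,2,5),(5,2,4),(4,2,2),(3,2,4),(1,1,4),(2,1,2),(2,2,4),(1,2,2),(3,2,1),(5,1,1),(3,1,2),(4,1,4),(5,1,2),(3,2,2),(1,2,1),(2,2,3),(2,1,5),(4,2,5),(4,1,3),(3,1,1),(3,2,3),(5,2,2),(4,2,4),(2,2,5),(4,1,5),(3,1,3),(5,1,4),(4,1,2),(2,2,2),(2,1,4),(1,1,2),(1,2,4),(3,1,4),(1,1,5)]" "((2,1,3),(1,1,1))" "((4,1,3),(3,1,1))" "((5,1,3),(5,2,1))" "((5,2,3),(5,1,5))"]) code_simp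

lemma A_5_3_2: "Good 5 3 2 {0,1,2}"
  by (rule chk_ok[of 5 3 2 "{0,1,2}" "[(1,1,1),(1,3,2),(2,1,2),(4,2,2),(2,2,1),(4,3,1),(2,3,2),(2,1,1),(1,3,1),(1,1,2),(3,2,2),(1,2,1),(3,3,1),(5,2,1),(3,1,1),(5,1,2),(5,3,1),(4,1,1),(4,3,2),(2,3,1),(4,2,1),(2,2,2),(4,1,2),(5,3,2),(5,1,1),(3,1,2),(1,2,2),(3,3,2),(5,2,2),(3,2,1)]" "((2,3,2),(2,1,1))" "((4,1,1),(4,3,2))" "((3,2,2),(1,2,1))" "((5,2,2),(3,2,1))"]) code_simp

lemma A_5_4_2: "Good 5 4 2 {0,1,2}"
  by (rule chk_ok[of 5 4 2 "{0,1,2}" "[(1,1,1),(1,3,2),(3,4,2),(5,4,1),(5,2,2),(4,4,2),(2,4,1),(1,2,1),(1,4,2),(2,2,2),(4,2,1),(3,4,1),(5,4,2),(4,2,2),(2,1,2),(4,1,1),(2,2,1),(1,4,1),(1,2,2),(2,4,2),(4,3,2),(2,3,1),(4,4,1),(5,2,1),(3,3,1),(5,3,2),(3,2,2),(1,1,2),(3,1,1),(5,1,2),(5,3,1),(3,3,2),(4,1,2),(4,3,1),(5,1,1),(3,1,2),(2,3,2),(2,1,1),(1,3,1),(3,2,1)]" "((1,3,2),(3,4,2))" "((3,2,2),(1,1,2))" "((4,2,1),(3,4,1))" "((2,2,1),(1,4,1))"]) code_simp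

lemma A_5_5_2: "Good 5 5 2 {0,1}"
  by (rule chk_ok[of 5 5 2 "{0,1}" "[(1,1,1),(1,3,2),(1,5,1),(2,3,1),(2,5,2),(4,5,1),(2,4,1),(4,4,2),(5,2,2),(3,1,2),(1,2,2),(1,4,1),(2,2,1),(4,1,1),(2,1,2),(4,2,2),(5,4,2),(5,2,1),(4,4,1),(2,5,1),(4,5,2),(2,4,2),(4,3,2),(5,1,2),(5,3,1),(5,5,2),(3,5,1),(5,4,1),(4,2,1),(2,2,2),(3,4,2),(1,5,2),(2,3,2),(1,1,2),(3,2,2),(3,4,1),(5,5,1),(4,3,1),(3,1,1),(1,2,1),(1,4,2),(3,5,2),(3,3,1),(2,1,1),(1,3,1),(3,3,2),(4,1,2),(5,3,2),(5,1,1),(3,2,1)]" "((1,5,1),(2,3,1))" "((2,1,1),(1,3,1))" "((5,2,2),(3,1,2))" "((1,1,2),(3,2,2))"]) code_simp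

lemma A_6_2_3: "Good 6 2 3 {0,2}"
  by (rule chk_ok[of 6 2 3 "{0,2}" "[(2,1,3),(1,1,1),(1,2,3),(2,2,1),(3,2,3),(1,2,2),(3,2,1),(5,2,2),(3,1,2),(1,1,3),(1,2,1),(2,2,3),(2,1,1),(4,1,2),(2,2,2),(4,2,1),(6,2,2),(4,2,3),(5,2,1),(6,2,3),(6,1,1),(5,1,3),(4,1,1),(2,1,2),(4,2,2),(6,1,2),(4,1,3),(5,1,1),(6,1,3),(6,2,1),(5,2,3),(3,2,2),(1,1,2),(3,1,3),(5,1,2),(3,1,1)]" "((3,2,3),(1,2,2))" "((5,2,3),(3,2,2))" "((3,1,2),(1,1,3))" "((3,1,3),(5,1,2))"]) code_simp

lemma A_6_3_2: "Good 6 3 2 {0,1,2}"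
  by (rule chk_ok[of 6 3 2 "{0,1,2}" "[(1,1,1),(1,3,2),(2,1,2),(2,3,1),(4,2,1),(2,2,2),(4,1,2),(6,2,2),(4,3,2),(5,1,2),(6,3,2),(6,1,1),(5,3,1),(4,1,1),(2,2,1),(4,2,2),(6,2,1),(4,3,1),(2,3,2),(2,1,1),(1,3,1),(1,1,2),(3,2,2),(1,2,1),(3,1,1),(5,2,1),(3,3,1),(5,3,2),(6,1,2),(6,3,1),(5,1,1),(3,1,2),(1,2,2),(3,3,2),(5,2,2),(3,2,1)]" "((2,3,1),(4,2,1))" "((6,2,1),(4,3,1))" "((3,2,2),(1,2,1))" "((5,2,2),(3,2,1))"]) code_simp

lemma A_6_3_3: "Good 6 3 3 {0}"
  by (rule chk_ok[of 6 3 3 "{0}" "[(2,1,3),(1,1,1),(1,2,3),(2,2,1),(4,2,2),(6,1,2),(6,3,1),(5,1,1),(6,1,3),(6,2,1),(6,3,3),(5,1,3),(5,3,2),(4,1,2),(6,2,2),(4,2,3),(2,2,2),(4,3,2),(4,1,1),(2,1,2),(1,3,2),(3,2,2),(5,2,1),(6,2,3),(6,1,1),(6,3,2),(5,1,2),(5,3,1),(5,2,3),(4,2,1),(2,3,1),(1,3,3),(1,2,1),(2,2,3),(4,1,3),(3,3,3),(4,3,1),(3,1,1),(1,1,2),(1,3,1),(2,3,3),(1,1,3),(2,1,1),(3,1,3),(4,3,3),(3,3,1),(3,2,3),(5,3,3),(3,3,2),(1,2,2),(3,2,1),(5,2,2),(3,1,2),(2,3,2)]" "((2,1,3),(1,1,1))"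 "((1,3,1),(2,3,3))" "((6,3,1),(5,1,1))" "((6,3,3),(5,1,3))"]) code_simp

lemma A_7_2_3: "Good 7 2 3 {0,1,2}"
  by (rule chk_ok[of 7 2 3 "{0,1,2}" "[(2,1,3),(1,1,1),(1,2,3),(2,2,1),(4,2,2),(2,1,2),(4,1,1),(6,1,2),(4,1,3),(2,2,3),(1,2,1),(3,1,1),(1,1,2),(3,2,2),(5,1,2),(7,2,2),(5,2,1),(7,1,1),(6,1,3),(6,2,1),(7,2,3),(5,1,3),(7,1,2),(5,2,2),(3,1,2),(1,1,3),(3,2,3),(1,2,2),(3,2,1),(5,1,1),(7,2,1),(6,2,3),(6,1,1),(7,1,3),(5,2,3),(3,1,3),(2,1,1),(4,1,2),(2,2,2),(4,2,1),(6,2,2),(4,2,3)]" "((2,2,1),(4,2,2))" "((4,2,1),(6,2,2))" "((4,1,1),(6,1,2))" "((2,1,1),(4,1,2))"]) code_simp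

lemma A_7_3_2: "Good 7 3 2 {0,1}"
  by (rule chk_ok[of 7 3 2 "{0,1}" "[(1,1,1),(1,3,2),(2,1,2),(2,3,1),(3,1,1),(1,2,1),(3,2,2),(1,1,2),(2,3,2),(4,2,2),(2,2,1),(4,3,1),(6,2,1),(4,1,1),(6,1,2),(7,3,2),(7,1,1),(5,2,1),(3,3,1),(2,1,1),(4,2,1),(2,2,2),(4,1,2),(6,2,2),(4,3,2),(6,3,1),(5,1,1),(7,1,2),(7,3,1),(5,3,2),(7,2,2),(5,1,2),(6,3,2),(6,1,1),(5,3,1),(7,2,1),(5,2,2),(3,1,2),(1,2,2),(3,3,2),(1,3,1),(3,2,1)]" "((3,2,2),(1,1,2))" "((5,2,2),(3,1,2))" "((2,3,2),(4,2,2))" "((6,2,2),(4,3,2))"]) code_simp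


lemma G_2_3_4: "Good 2 3 4 {0,1,2}" by (rule A_2_3_4)

lemma G_2_4_3: "Good 2 4 3 {0,1,2}" by (rule A_2_4_3)

lemma G_3_2_4: "Good 3 2 4 {0,1,2}" by (rule A_3_2_4)

lemma G_3_4_2: "Good 3 4 2 {0,1,2}" by (rule A_3_4_2)

lemma G_4_2_3: "Good 4 2 3 {0,1,2}" by (rule A_4_2_3)

lemma G_4_3_2: "Good 4 3 2 {0,1,2}" by (rule A_4_3_2)

lemma G_2_3_5: "Good 2 3 5 {0,1,2}" by (rule A_2_3_5)

lemma G_2_5_3: "Good 2 5 3 {0,1,2}" by (rule A_2_5_3)

lemma G_3_2_5: "Good 3 2 5 {0,1,2}" by (rule A_3_2_5)

lemma G_3_5_2: "Good 3 5 2 {0,1,2}" by (rule A_3_5_2)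

lemma G_5_2_3: "Good 5 2 3 {0,1,2}" by (rule A_5_2_3)

lemma G_5_3_2: "Good 5 3 2 {0,1,2}" by (rule A_5_3_2)

lemma G_2_4_4: "Good 2 4 4 {0,1,2}" by (rule A_2_4_4)

lemma G_4_2_4: "Good 4 2 4 {0,1,2}" by (rule A_4_2_4)

lemma G_4_4_2: "Good 4 4 2 {0,1,2}" by (rule A_4_4_2)

lemma G_2_3_6: "Good 2 3 6 {2}" by (rule A_2_3_6)

lemma G_2_6_3: "Good 2 6 3 {1,2}" by (rule A_2_6_3)

lemma G_3_2_6: "Good 3 2 6 {0,2}" by (rule A_3_2_6)

lemma G_3_3_4: "Good 3 3 4 {0,1,2}" by (rule A_3_3_4)

lemma G_3_4_3: "Good 3 4 3 {0,1,2}" by (rule A_3_4_3)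

lemma G_3_6_2: "Good 3 6 2 {1}" by (rule A_3_6_2)

lemma G_4_3_3: "Good 4 3 3 {0,1,2}" by (rule A_4_3_3)

lemma G_6_2_3: "Good 6 2 3 {0,2}" by (rule A_6_2_3)

lemma G_6_3_2: "Good 6 3 2 {0,1,2}" by (rule A_6_3_2)

lemma G_2_4_5: "Good 2 4 5 {0,1,2}" by (rule A_2_4_5)

lemma G_2_5_4: "Good 2 5 4 {0,1,2}" by (rule A_2_5_4)

lemma G_4_2_5: "Good 4 2 5 {0,1,2}" by (rule A_4_2_5)

lemma G_4_5_2: "Good 4 5 2 {0,1,2}" by (rule A_4_5_2)

lemma G_5_2_4: "Good 5 2 4 {0,1,2}" by (rule A_5_2_4)

lemma G_5_4_2: "Good 5 4 2 {0,1,2}" by (rule A_5_4_2)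

lemma G_2_3_7: "Good 2 3 7 {2}" by (rule A_2_3_7)

lemma G_2_7_3: "Good 2 7 3 {0,1,2}" by (rule A_2_7_3)

lemma G_3_2_7: "Good 3 2 7 {2}" by (rule A_3_2_7)

lemma G_3_7_2: "Good 3 7 2 {1}" by (rule A_3_7_2)

lemma G_7_2_3: "Good 7 2 3 {0,1,2}" by (rule A_7_2_3)

lemma G_7_3_2: "Good 7 3 2 {0,1}" by (rule A_7_3_2)

lemma G_2_4_6: "Good 2 4 6 {0,1,2}"
proof -
  have "Good 2 4 (3+3) {0,1,2}" by (rule GmergeZ[OF G_2_4_3 G_2_4_3]) simp_all
  then have "Good 2 4 6 {0,1,2}" by simp
  then show ?thesis by (rule Good_mono) auto
qed

lemma G_2_6_4: "Good 2 6 4 {0,1,2}"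
proof -
  have "Good 2 (3+3) 4 {0,1,2}" by (rule GmergeY[OF G_2_3_4 G_2_3_4]) simp_all
  then have "Good 2 6 4 {0,1,2}" by simp
  then show ?thesis by (rule Good_mono) auto
qed

lemma G_3_4_4: "Good 3 4 4 {0,1,2}" by (rule A_3_4_4)

lemma G_4_2_6: "Good 4 2 6 {0,1,2}"
proof -
  have "Good 4 2 (3+3) {0,1,2}" by (rule GmergeZ[OF G_4_2_3 G_4_2_3]) simp_all
  then have "Good 4 2 6 {0,1,2}" by simp
  then show ?thesis by (rule Good_mono) auto
qed

lemma G_4_3_4: "Good 4 3 4 {0,1,2}"
proof -
  have "Good (2+2) 3 4 {0,1,2}" by (rule GmergeX[OF G_2_3_4 G_2_3_4]) simp_all
  then have "Good 4 3 4 {0,1,2}" by simp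
  then show ?thesis by (rule Good_mono) auto
qed

lemma G_4_4_3: "Good 4 4 3 {0,1,2}"
proof -
  have "Good (2+2) 4 3 {0,1,2}" by (rule GmergeX[OF G_2_4_3 G_2_4_3]) simp_all
  then have "Good 4 4 3 {0,1,2}" by simp
  then show ?thesis by (rule Good_mono) auto
qed

lemma G_4_6_2: "Good 4 6 2 {0,1,2}"
proof -
  have "Good 4 (3+3) 2 {0,1,2}" by (rule GmergeY[OF G_4_3_2 G_4_3_2]) simp_all
  then have "Good 4 6 2 {0,1,2}" by simp
  then show ?thesis by (rule Good_mono) auto
qed

lemma G_6_2_4: "Good 6 2 4 {0,1,2}"
proof -
  have "Good (3+3) 2 4 {0,1,2}" by (rule GmergeX[OF G_3_2_4 G_3_2_4]) simp_all
  then have "Good 6 2 4 {0,1,2}" by simp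
  then show ?thesis by (rule Good_mono) auto
qed

lemma G_6_4_2: "Good 6 4 2 {0,1,2}"
proof -
  have "Good (3+3) 4 2 {0,1,2}" by (rule GmergeX[OF G_3_4_2 G_3_4_2]) simp_all
  then have "Good 6 4 2 {0,1,2}" by simp
  then show ?thesis by (rule Good_mono) auto
qed

lemma G_2_5_5: "Good 2 5 5 {1,2}" by (rule A_2_5_5)

lemma G_5_2_5: "Good 5 2 5 {0,2}" by (rule A_5_2_5)

lemma G_5_5_2: "Good 5 5 2 {0,1}" by (rule A_5_5_2)

lemma G_3_3_6: "Good 3 3 6 {0,1,2}" by (rule A_3_3_6)

lemma G_3_6_3: "Good 3 6 3 {0,1,2}" by (rule A_3_6_3)

lemma G_6_3_3: "Good 6 3 3 {0}" by (rule A_6_3_3)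

lemma G_2_4_7: "Good 2 4 7 {0,1,2}"
proof -
  have "Good 2 4 (3+4) {0,1,2}" by (rule GmergeZ[OF G_2_4_3 G_2_4_4]) simp_all
  then have "Good 2 4 7 {0,1,2}" by simp
  then show ?thesis by (rule Good_mono) auto
qed

lemma G_2_7_4: "Good 2 7 4 {0,1,2}"
proof -
  have "Good 2 (4+3) 4 {0,1,2}" by (rule GmergeY[OF G_2_4_4 G_2_3_4]) simp_all
  then have "Good 2 7 4 {0,1,2}" by simp
  then show ?thesis by (rule Good_mono) auto
qed

lemma G_4_2_7: "Good 4 2 7 {0,1,2}"
proof -
  have "Good 4 2 (4+3) {0,1,2}" by (rule GmergeZ[OF G_4_2_4 G_4_2_3]) simp_all
  then have "Good 4 2 7 {0,1,2}" by simp
  then show ?thesis by (rule Good_mono) auto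
qed

lemma G_4_7_2: "Good 4 7 2 {0,1,2}"
proof -
  have "Good 4 (4+3) 2 {0,1,2}" by (rule GmergeY[OF G_4_4_2 G_4_3_2]) simp_all
  then have "Good 4 7 2 {0,1,2}" by simp
  then show ?thesis by (rule Good_mono) auto
qed

lemma G_7_2_4: "Good 7 2 4 {0,1,2}"
proof -
  have "Good (4+3) 2 4 {0,1,2}" by (rule GmergeX[OF G_4_2_4 G_3_2_4]) simp_all
  then have "Good 7 2 4 {0,1,2}" by simp
  then show ?thesis by (rule Good_mono) auto
qed

lemma G_7_4_2: "Good 7 4 2 {0,1,2}"
proof -
  have "Good (4+3) 4 2 {0,1,2}" by (rule GmergeX[OF G_4_4_2 G_3_4_2]) simp_all
  then have "Good 7 4 2 {0,1,2}" by simp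
  then show ?thesis by (rule Good_mono) auto
qed

lemma G_2_5_6: "Good 2 5 6 {1,2}"
proof -
  have "Good 2 5 (3+3) {0,1,2}" by (rule GmergeZ[OF G_2_5_3 G_2_5_3]) simp_all
  then have "Good 2 5 6 {0,1,2}" by simp
  then show ?thesis by (rule Good_mono) auto
qed

lemma G_2_6_5: "Good 2 6 5 {0,1,2}"
proof -
  have "Good 2 (3+3) 5 {0,1,2}" by (rule GmergeY[OF G_2_3_5 G_2_3_5]) simp_all
  then have "Good 2 6 5 {0,1,2}" by simp
  then show ?thesis by (rule Good_mono) auto
qed

lemma G_3_4_5: "Good 3 4 5 {0,1,2}"
proof -
  have "Good 3 4 (3+2) {0,1,2}" by (rule GmergeZ[OF G_3_4_3 G_3_4_2]) simp_all
  then have "Good 3 4 5 {0,1,2}" by simp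
  then show ?thesis by (rule Good_mono) auto
qed

lemma G_3_5_4: "Good 3 5 4 {0,1,2}"
proof -
  have "Good 3 (3+2) 4 {0,1,2}" by (rule GmergeY[OF G_3_3_4 G_3_2_4]) simp_all
  then have "Good 3 5 4 {0,1,2}" by simp
  then show ?thesis by (rule Good_mono) auto
qed

lemma G_4_3_5: "Good 4 3 5 {0,1,2}"
proof -
  have "Good 4 3 (3+2) {0,1,2}" by (rule GmergeZ[OF G_4_3_3 G_4_3_2]) simp_all
  then have "Good 4 3 5 {0,1,2}" by simp
  then show ?thesis by (rule Good_mono) auto
qed

lemma G_4_5_3: "Good 4 5 3 {0,1,2}"
proof -
  have "Good 4 (3+2) 3 {0,1,2}" by (rule GmergeY[OF G_4_3_3 G_4_2_3]) simp_all
  then have "Good 4 5 3 {0,1,2}" by simp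
  then show ?thesis by (rule Good_mono) auto
qed

lemma G_5_2_6: "Good 5 2 6 {0,1,2}"
proof -
  have "Good 5 2 (3+3) {0,1,2}" by (rule GmergeZ[OF G_5_2_3 G_5_2_3]) simp_all
  then have "Good 5 2 6 {0,1,2}" by simp
  then show ?thesis by (rule Good_mono) auto
qed

lemma G_5_3_4: "Good 5 3 4 {0,1,2}"
proof -
  have "Good (3+2) 3 4 {0,1,2}" by (rule GmergeX[OF G_3_3_4 G_2_3_4]) simp_all
  then have "Good 5 3 4 {0,1,2}" by simp
  then show ?thesis by (rule Good_mono) auto
qed

lemma G_5_4_3: "Good 5 4 3 {0,1,2}"
proof -
  have "Good (3+2) 4 3 {0,1,2}" by (rule GmergeX[OF G_3_4_3 G_2_4_3]) simp_all
  then have "Good 5 4 3 {0,1,2}" by simp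
  then show ?thesis by (rule Good_mono) auto
qed

lemma G_5_6_2: "Good 5 6 2 {0,1,2}"
proof -
  have "Good 5 (3+3) 2 {0,1,2}" by (rule GmergeY[OF G_5_3_2 G_5_3_2]) simp_all
  then have "Good 5 6 2 {0,1,2}" by simp
  then show ?thesis by (rule Good_mono) auto
qed

lemma G_6_2_5: "Good 6 2 5 {0,2}"
proof -
  have "Good (3+3) 2 5 {0,1,2}" by (rule GmergeX[OF G_3_2_5 G_3_2_5]) simp_all
  then have "Good 6 2 5 {0,1,2}" by simp
  then show ?thesis by (rule Good_mono) auto
qed

lemma G_6_5_2: "Good 6 5 2 {0,1,2}"
proof -
  have "Good (3+3) 5 2 {0,1,2}" by (rule GmergeX[OF G_3_5_2 G_3_5_2]) simp_all
  then have "Good 6 5 2 {0,1,2}" by simp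
  then show ?thesis by (rule Good_mono) auto
qed

lemma G_4_4_4: "Good 4 4 4 {0,1,2}"
proof -
  have "Good (2+2) 4 4 {0,1,2}" by (rule GmergeX[OF G_2_4_4 G_2_4_4]) simp_all
  then have "Good 4 4 4 {0,1,2}" by simp
  then show ?thesis by (rule Good_mono) auto
qed

lemma G_2_5_7: "Good 2 5 7 {1,2}"
proof -
  have "Good 2 5 (3+4) {0,1,2}" by (rule GmergeZ[OF G_2_5_3 G_2_5_4]) simp_all
  then have "Good 2 5 7 {0,1,2}" by simp
  then show ?thesis by (rule Good_mono) auto
qed

lemma G_2_7_5: "Good 2 7 5 {1,2}"
proof -
  have "Good 2 (3+4) 5 {0,1,2}" by (rule GmergeY[OF G_2_3_5 G_2_4_5]) simp_all
  then have "Good 2 7 5 {0,1,2}" by simp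
  then show ?thesis by (rule Good_mono) auto
qed

lemma G_5_2_7: "Good 5 2 7 {0,2}"
proof -
  have "Good 5 2 (3+4) {0,1,2}" by (rule GmergeZ[OF G_5_2_3 G_5_2_4]) simp_all
  then have "Good 5 2 7 {0,1,2}" by simp
  then show ?thesis by (rule Good_mono) auto
qed

lemma G_5_7_2: "Good 5 7 2 {0,1}"
proof -
  have "Good 5 (3+4) 2 {0,1,2}" by (rule GmergeY[OF G_5_3_2 G_5_4_2]) simp_all
  then have "Good 5 7 2 {0,1,2}" by simp
  then show ?thesis by (rule Good_mono) auto
qed

lemma G_7_2_5: "Good 7 2 5 {0,2}"
proof -
  have "Good (4+3) 2 5 {0,1,2}" by (rule GmergeX[OF G_4_2_5 G_3_2_5]) simp_all
  then have "Good 7 2 5 {0,1,2}" by simp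
  then show ?thesis by (rule Good_mono) auto
qed

lemma G_7_5_2: "Good 7 5 2 {0,1}"
proof -
  have "Good (3+4) 5 2 {0,1,2}" by (rule GmergeX[OF G_3_5_2 G_4_5_2]) simp_all
  then have "Good 7 5 2 {0,1,2}" by simp
  then show ?thesis by (rule Good_mono) auto
qed

lemma G_2_6_6: "Good 2 6 6 {1,2}"
proof -
  have "Good 2 6 (3+3) {1,2}" by (rule GmergeZ[OF G_2_6_3 G_2_6_3]) simp_all
  then have "Good 2 6 6 {1,2}" by simp
  then show ?thesis by (rule Good_mono) auto
qed

lemma G_3_4_6: "Good 3 4 6 {0,1,2}"
proof -
  have "Good 3 4 (4+2) {0,1,2}" by (rule GmergeZ[OF G_3_4_4 G_3_4_2]) simp_all
  then have "Good 3 4 6 {0,1,2}" by simp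
  then show ?thesis by (rule Good_mono) auto
qed

lemma G_3_6_4: "Good 3 6 4 {0,1,2}"
proof -
  have "Good 3 (4+2) 4 {0,1,2}" by (rule GmergeY[OF G_3_4_4 G_3_2_4]) simp_all
  then have "Good 3 6 4 {0,1,2}" by simp
  then show ?thesis by (rule Good_mono) auto
qed

lemma G_4_3_6: "Good 4 3 6 {0,1,2}"
proof -
  have "Good 4 3 (4+2) {0,1,2}" by (rule GmergeZ[OF G_4_3_4 G_4_3_2]) simp_all
  then have "Good 4 3 6 {0,1,2}" by simp
  then show ?thesis by (rule Good_mono) auto
qed

lemma G_4_6_3: "Good 4 6 3 {0,1,2}"
proof -
  have "Good 4 (3+3) 3 {0,1,2}" by (rule GmergeY[OF G_4_3_3 G_4_3_3]) simp_all
  then have "Good 4 6 3 {0,1,2}" by simp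
  then show ?thesis by (rule Good_mono) auto
qed

lemma G_6_2_6: "Good 6 2 6 {0,2}"
proof -
  have "Good 6 2 (3+3) {0,2}" by (rule GmergeZ[OF G_6_2_3 G_6_2_3]) simp_all
  then have "Good 6 2 6 {0,2}" by simp
  then show ?thesis by (rule Good_mono) auto
qed

lemma G_6_3_4: "Good 6 3 4 {0,1,2}"
proof -
  have "Good (4+2) 3 4 {0,1,2}" by (rule GmergeX[OF G_4_3_4 G_2_3_4]) simp_all
  then have "Good 6 3 4 {0,1,2}" by simp
  then show ?thesis by (rule Good_mono) auto
qed

lemma G_6_4_3: "Good 6 4 3 {0,1,2}"
proof -
  have "Good (4+2) 4 3 {0,1,2}" by (rule GmergeX[OF G_4_4_3 G_2_4_3]) simp_all
  then have "Good 6 4 3 {0,1,2}" by simp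
  then show ?thesis by (rule Good_mono) auto
qed

lemma G_6_6_2: "Good 6 6 2 {0,1}"
proof -
  have "Good 6 (3+3) 2 {0,1,2}" by (rule GmergeY[OF G_6_3_2 G_6_3_2]) simp_all
  then have "Good 6 6 2 {0,1,2}" by simp
  then show ?thesis by (rule Good_mono) auto
qed

lemma G_4_4_5: "Good 4 4 5 {0,1,2}"
proof -
  have "Good (2+2) 4 5 {0,1,2}" by (rule GmergeX[OF G_2_4_5 G_2_4_5]) simp_all
  then have "Good 4 4 5 {0,1,2}" by simp
  then show ?thesis by (rule Good_mono) auto
qed

lemma G_4_5_4: "Good 4 5 4 {0,1,2}"
proof -
  have "Good 4 (3+2) 4 {0,1,2}" by (rule GmergeY[OF G_4_3_4 G_4_2_4]) simp_all
  then have "Good 4 5 4 {0,1,2}" by simp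
  then show ?thesis by (rule Good_mono) auto
qed

lemma G_5_4_4: "Good 5 4 4 {0,1,2}"
proof -
  have "Good (2+3) 4 4 {0,1,2}" by (rule GmergeX[OF G_2_4_4 G_3_4_4]) simp_all
  then have "Good 5 4 4 {0,1,2}" by simp
  then show ?thesis by (rule Good_mono) auto
qed

lemma G_2_6_7: "Good 2 6 7 {0,1,2}"
proof -
  have "Good 2 6 (4+3) {0,1,2}" by (rule GmergeZ[OF G_2_6_4 G_2_6_3]) simp_all
  then have "Good 2 6 7 {0,1,2}" by simp
  then show ?thesis by (rule Good_mono) auto
qed

lemma G_2_7_6: "Good 2 7 6 {1,2}"
proof -
  have "Good 2 7 (3+3) {0,1,2}" by (rule GmergeZ[OF G_2_7_3 G_2_7_3]) simp_all
  then have "Good 2 7 6 {0,1,2}" by simp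
  then show ?thesis by (rule Good_mono) auto
qed

lemma G_3_4_7: "Good 3 4 7 {0,1,2}"
proof -
  have "Good 3 4 (5+2) {0,1,2}" by (rule GmergeZ[OF G_3_4_5 G_3_4_2]) simp_all
  then have "Good 3 4 7 {0,1,2}" by simp
  then show ?thesis by (rule Good_mono) auto
qed

lemma G_3_7_4: "Good 3 7 4 {0,1,2}"
proof -
  have "Good 3 (5+2) 4 {0,1,2}" by (rule GmergeY[OF G_3_5_4 G_3_2_4]) simp_all
  then have "Good 3 7 4 {0,1,2}" by simp
  then show ?thesis by (rule Good_mono) auto
qed

lemma G_4_3_7: "Good 4 3 7 {0,1,2}"
proof -
  have "Good 4 3 (3+4) {0,1,2}" by (rule GmergeZ[OF G_4_3_3 G_4_3_4]) simp_all
  then have "Good 4 3 7 {0,1,2}" by simp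
  then show ?thesis by (rule Good_mono) auto
qed

lemma G_4_7_3: "Good 4 7 3 {0,1,2}"
proof -
  have "Good 4 (3+4) 3 {0,1,2}" by (rule GmergeY[OF G_4_3_3 G_4_4_3]) simp_all
  then have "Good 4 7 3 {0,1,2}" by simp
  then show ?thesis by (rule Good_mono) auto
qed

lemma G_6_2_7: "Good 6 2 7 {0,2}"
proof -
  have "Good 6 2 (3+4) {0,2}" by (rule GmergeZ[OF G_6_2_3 G_6_2_4]) simp_all
  then have "Good 6 2 7 {0,2}" by simp
  then show ?thesis by (rule Good_mono) auto
qed

lemma G_6_7_2: "Good 6 7 2 {0,1}"
proof -
  have "Good 6 (4+3) 2 {0,1,2}" by (rule GmergeY[OF G_6_4_2 G_6_3_2]) simp_all
  then have "Good 6 7 2 {0,1,2}" by simp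
  then show ?thesis by (rule Good_mono) auto
qed

lemma G_7_2_6: "Good 7 2 6 {0,1,2}"
proof -
  have "Good (4+3) 2 6 {0,1,2}" by (rule GmergeX[OF G_4_2_6 G_3_2_6]) simp_all
  then have "Good 7 2 6 {0,1,2}" by simp
  then show ?thesis by (rule Good_mono) auto
qed

lemma G_7_3_4: "Good 7 3 4 {0,1,2}"
proof -
  have "Good (5+2) 3 4 {0,1,2}" by (rule GmergeX[OF G_5_3_4 G_2_3_4]) simp_all
  then have "Good 7 3 4 {0,1,2}" by simp
  then show ?thesis by (rule Good_mono) auto
qed

lemma G_7_4_3: "Good 7 4 3 {0,1,2}"
proof -
  have "Good (2+5) 4 3 {0,1,2}" by (rule GmergeX[OF G_2_4_3 G_5_4_3]) simp_all
  then have "Good 7 4 3 {0,1,2}" by simp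
  then show ?thesis by (rule Good_mono) auto
qed

lemma G_7_6_2: "Good 7 6 2 {0,1}"
proof -
  have "Good 7 (3+3) 2 {0,1}" by (rule GmergeY[OF G_7_3_2 G_7_3_2]) simp_all
  then have "Good 7 6 2 {0,1}" by simp
  then show ?thesis by (rule Good_mono) auto
qed

lemma G_3_5_6: "Good 3 5 6 {0,1,2}"
proof -
  have "Good 3 5 (4+2) {0,1,2}" by (rule GmergeZ[OF G_3_5_4 G_3_5_2]) simp_all
  then have "Good 3 5 6 {0,1,2}" by simp
  then show ?thesis by (rule Good_mono) auto
qed

lemma G_3_6_5: "Good 3 6 5 {0,1,2}"
proof -
  have "Good 3 (4+2) 5 {0,1,2}" by (rule GmergeY[OF G_3_4_5 G_3_2_5]) simp_all
  then have "Good 3 6 5 {0,1,2}" by simp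
  then show ?thesis by (rule Good_mono) auto
qed

lemma G_5_3_6: "Good 5 3 6 {0,1,2}"
proof -
  have "Good 5 3 (4+2) {0,1,2}" by (rule GmergeZ[OF G_5_3_4 G_5_3_2]) simp_all
  then have "Good 5 3 6 {0,1,2}" by simp
  then show ?thesis by (rule Good_mono) auto
qed

lemma G_5_6_3: "Good 5 6 3 {0,1}"
proof -
  have "Good 5 (4+2) 3 {0,1,2}" by (rule GmergeY[OF G_5_4_3 G_5_2_3]) simp_all
  then have "Good 5 6 3 {0,1,2}" by simp
  then show ?thesis by (rule Good_mono) auto
qed

lemma G_6_3_5: "Good 6 3 5 {0,1,2}"
proof -
  have "Good (2+4) 3 5 {0,1,2}" by (rule GmergeX[OF G_2_3_5 G_4_3_5]) simp_all
  then have "Good 6 3 5 {0,1,2}" by simp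
  then show ?thesis by (rule Good_mono) auto
qed

lemma G_6_5_3: "Good 6 5 3 {0,1,2}"
proof -
  have "Good (2+4) 5 3 {0,1,2}" by (rule GmergeX[OF G_2_5_3 G_4_5_3]) simp_all
  then have "Good 6 5 3 {0,1,2}" by simp
  then show ?thesis by (rule Good_mono) auto
qed

lemma G_4_4_6: "Good 4 4 6 {0,1,2}"
proof -
  have "Good 4 4 (3+3) {0,1,2}" by (rule GmergeZ[OF G_4_4_3 G_4_4_3]) simp_all
  then have "Good 4 4 6 {0,1,2}" by simp
  then show ?thesis by (rule Good_mono) auto
qed

lemma G_4_6_4: "Good 4 6 4 {0,1,2}"
proof -
  have "Good 4 (3+3) 4 {0,1,2}" by (rule GmergeY[OF G_4_3_4 G_4_3_4]) simp_all
  then have "Good 4 6 4 {0,1,2}" by simp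
  then show ?thesis by (rule Good_mono) auto
qed

lemma G_6_4_4: "Good 6 4 4 {0,1,2}"
proof -
  have "Good (3+3) 4 4 {0,1,2}" by (rule GmergeX[OF G_3_4_4 G_3_4_4]) simp_all
  then have "Good 6 4 4 {0,1,2}" by simp
  then show ?thesis by (rule Good_mono) auto
qed

lemma G_2_7_7: "Good 2 7 7 {1,2}"
proof -
  have "Good 2 7 (3+4) {0,1,2}" by (rule GmergeZ[OF G_2_7_3 G_2_7_4]) simp_all
  then have "Good 2 7 7 {0,1,2}" by simp
  then show ?thesis by (rule Good_mono) auto
qed

lemma G_7_2_7: "Good 7 2 7 {0,2}"
proof -
  have "Good 7 2 (4+3) {0,1,2}" by (rule GmergeZ[OF G_7_2_4 G_7_2_3]) simp_all
  then have "Good 7 2 7 {0,1,2}" by simp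
  then show ?thesis by (rule Good_mono) auto
qed

lemma G_7_7_2: "Good 7 7 2 {0,1}"
proof -
  have "Good 7 (3+4) 2 {0,1}" by (rule GmergeY[OF G_7_3_2 G_7_4_2]) simp_all
  then have "Good 7 7 2 {0,1}" by simp
  then show ?thesis by (rule Good_mono) auto
qed

lemma G_4_5_5: "Good 4 5 5 {0,1,2}"
proof -
  have "Good 4 5 (3+2) {0,1,2}" by (rule GmergeZ[OF G_4_5_3 G_4_5_2]) simp_all
  then have "Good 4 5 5 {0,1,2}" by simp
  then show ?thesis by (rule Good_mono) auto
qed

lemma G_5_4_5: "Good 5 4 5 {0,1,2}"
proof -
  have "Good 5 4 (3+2) {0,1,2}" by (rule GmergeZ[OF G_5_4_3 G_5_4_2]) simp_all
  then have "Good 5 4 5 {0,1,2}" by simp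
  then show ?thesis by (rule Good_mono) auto
qed

lemma G_5_5_4: "Good 5 5 4 {0,1,2}"
proof -
  have "Good 5 (3+2) 4 {0,1,2}" by (rule GmergeY[OF G_5_3_4 G_5_2_4]) simp_all
  then have "Good 5 5 4 {0,1,2}" by simp
  then show ?thesis by (rule Good_mono) auto
qed

lemma G_3_6_6: "Good 3 6 6 {0,1,2}"
proof -
  have "Good 3 6 (3+3) {0,1,2}" by (rule GmergeZ[OF G_3_6_3 G_3_6_3]) simp_all
  then have "Good 3 6 6 {0,1,2}" by simp
  then show ?thesis by (rule Good_mono) auto
qed

lemma G_6_3_6: "Good 6 3 6 {0,1,2}"
proof -
  have "Good 6 3 (4+2) {0,1,2}" by (rule GmergeZ[OF G_6_3_4 G_6_3_2]) simp_all
  then have "Good 6 3 6 {0,1,2}" by simp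
  then show ?thesis by (rule Good_mono) auto
qed

lemma G_6_6_3: "Good 6 6 3 {0,1}"
proof -
  have "Good (3+3) 6 3 {0,1,2}" by (rule GmergeX[OF G_3_6_3 G_3_6_3]) simp_all
  then have "Good 6 6 3 {0,1,2}" by simp
  then show ?thesis by (rule Good_mono) auto
qed

lemma G_4_4_7: "Good 4 4 7 {0,1,2}"
proof -
  have "Good 4 4 (3+4) {0,1,2}" by (rule GmergeZ[OF G_4_4_3 G_4_4_4]) simp_all
  then have "Good 4 4 7 {0,1,2}" by simp
  then show ?thesis by (rule Good_mono) auto
qed

lemma G_4_7_4: "Good 4 7 4 {0,1,2}"
proof -
  have "Good 4 (4+3) 4 {0,1,2}" by (rule GmergeY[OF G_4_4_4 G_4_3_4]) simp_all
  then have "Good 4 7 4 {0,1,2}" by simp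
  then show ?thesis by (rule Good_mono) auto
qed

lemma G_7_4_4: "Good 7 4 4 {0,1,2}"
proof -
  have "Good (3+4) 4 4 {0,1,2}" by (rule GmergeX[OF G_3_4_4 G_4_4_4]) simp_all
  then have "Good 7 4 4 {0,1,2}" by simp
  then show ?thesis by (rule Good_mono) auto
qed

lemma G_4_5_6: "Good 4 5 6 {0,1,2}"
proof -
  have "Good 4 (3+2) 6 {0,1,2}" by (rule GmergeY[OF G_4_3_6 G_4_2_6]) simp_all
  then have "Good 4 5 6 {0,1,2}" by simp
  then show ?thesis by (rule Good_mono) auto
qed

lemma G_4_6_5: "Good 4 6 5 {0,1,2}"
proof -
  have "Good 4 6 (3+2) {0,1,2}" by (rule GmergeZ[OF G_4_6_3 G_4_6_2]) simp_all
  then have "Good 4 6 5 {0,1,2}" by simp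
  then show ?thesis by (rule Good_mono) auto
qed

lemma G_5_4_6: "Good 5 4 6 {0,1,2}"
proof -
  have "Good 5 4 (4+2) {0,1,2}" by (rule GmergeZ[OF G_5_4_4 G_5_4_2]) simp_all
  then have "Good 5 4 6 {0,1,2}" by simp
  then show ?thesis by (rule Good_mono) auto
qed

lemma G_5_6_4: "Good 5 6 4 {0,1,2}"
proof -
  have "Good (2+3) 6 4 {0,1,2}" by (rule GmergeX[OF G_2_6_4 G_3_6_4]) simp_all
  then have "Good 5 6 4 {0,1,2}" by simp
  then show ?thesis by (rule Good_mono) auto
qed

lemma G_6_4_5: "Good 6 4 5 {0,1,2}"
proof -
  have "Good (2+4) 4 5 {0,1,2}" by (rule GmergeX[OF G_2_4_5 G_4_4_5]) simp_all
  then have "Good 6 4 5 {0,1,2}" by simp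
  then show ?thesis by (rule Good_mono) auto
qed

lemma G_6_5_4: "Good 6 5 4 {0,1,2}"
proof -
  have "Good (2+4) 5 4 {0,1,2}" by (rule GmergeX[OF G_2_5_4 G_4_5_4]) simp_all
  then have "Good 6 5 4 {0,1,2}" by simp
  then show ?thesis by (rule Good_mono) auto
qed

lemma G_3_6_7: "Good 3 6 7 {0,1,2}"
proof -
  have "Good 3 6 (3+4) {0,1,2}" by (rule GmergeZ[OF G_3_6_3 G_3_6_4]) simp_all
  then have "Good 3 6 7 {0,1,2}" by simp
  then show ?thesis by (rule Good_mono) auto
qed

lemma G_3_7_6: "Good 3 7 6 {0,1,2}"
proof -
  have "Good 3 (3+4) 6 {0,1,2}" by (rule GmergeY[OF G_3_3_6 G_3_4_6]) simp_all
  then have "Good 3 7 6 {0,1,2}" by simp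
  then show ?thesis by (rule Good_mono) auto
qed

lemma G_6_3_7: "Good 6 3 7 {0,1,2}"
proof -
  have "Good 6 3 (5+2) {0,1,2}" by (rule GmergeZ[OF G_6_3_5 G_6_3_2]) simp_all
  then have "Good 6 3 7 {0,1,2}" by simp
  then show ?thesis by (rule Good_mono) auto
qed

lemma G_6_7_3: "Good 6 7 3 {0,1}"
proof -
  have "Good (2+4) 7 3 {0,1,2}" by (rule GmergeX[OF G_2_7_3 G_4_7_3]) simp_all
  then have "Good 6 7 3 {0,1,2}" by simp
  then show ?thesis by (rule Good_mono) auto
qed

lemma G_7_3_6: "Good 7 3 6 {0,2}"
proof -
  have "Good (3+4) 3 6 {0,1,2}" by (rule GmergeX[OF G_3_3_6 G_4_3_6]) simp_all
  then have "Good 7 3 6 {0,1,2}" by simp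
  then show ?thesis by (rule Good_mono) auto
qed

lemma G_7_6_3: "Good 7 6 3 {0,1,2}"
proof -
  have "Good 7 (4+2) 3 {0,1,2}" by (rule GmergeY[OF G_7_4_3 G_7_2_3]) simp_all
  then have "Good 7 6 3 {0,1,2}" by simp
  then show ?thesis by (rule Good_mono) auto
qed

lemma G_4_5_7: "Good 4 5 7 {0,1,2}"
proof -
  have "Good 4 5 (5+2) {0,1,2}" by (rule GmergeZ[OF G_4_5_5 G_4_5_2]) simp_all
  then have "Good 4 5 7 {0,1,2}" by simp
  then show ?thesis by (rule Good_mono) auto
qed

lemma G_4_7_5: "Good 4 7 5 {0,1,2}"
proof -
  have "Good 4 (4+3) 5 {0,1,2}" by (rule GmergeY[OF G_4_4_5 G_4_3_5]) simp_all
  then have "Good 4 7 5 {0,1,2}" by simp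
  then show ?thesis by (rule Good_mono) auto
qed

lemma G_5_4_7: "Good 5 4 7 {0,1,2}"
proof -
  have "Good (3+2) 4 7 {0,1,2}" by (rule GmergeX[OF G_3_4_7 G_2_4_7]) simp_all
  then have "Good 5 4 7 {0,1,2}" by simp
  then show ?thesis by (rule Good_mono) auto
qed

lemma G_5_7_4: "Good 5 7 4 {0,1,2}"
proof -
  have "Good 5 (4+3) 4 {0,1,2}" by (rule GmergeY[OF G_5_4_4 G_5_3_4]) simp_all
  then have "Good 5 7 4 {0,1,2}" by simp
  then show ?thesis by (rule Good_mono) auto
qed

lemma G_7_4_5: "Good 7 4 5 {0,1,2}"
proof -
  have "Good (2+5) 4 5 {0,1,2}" by (rule GmergeX[OF G_2_4_5 G_5_4_5]) simp_all
  then have "Good 7 4 5 {0,1,2}" by simp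
  then show ?thesis by (rule Good_mono) auto
qed

lemma G_7_5_4: "Good 7 5 4 {0,1,2}"
proof -
  have "Good 7 (3+2) 4 {0,1,2}" by (rule GmergeY[OF G_7_3_4 G_7_2_4]) simp_all
  then have "Good 7 5 4 {0,1,2}" by simp
  then show ?thesis by (rule Good_mono) auto
qed

lemma G_4_6_6: "Good 4 6 6 {0,1,2}"
proof -
  have "Good 4 (4+2) 6 {0,1,2}" by (rule GmergeY[OF G_4_4_6 G_4_2_6]) simp_all
  then have "Good 4 6 6 {0,1,2}" by simp
  then show ?thesis by (rule Good_mono) auto
qed

lemma G_6_4_6: "Good 6 4 6 {0,1,2}"
proof -
  have "Good (2+4) 4 6 {0,1,2}" by (rule GmergeX[OF G_2_4_6 G_4_4_6]) simp_all
  then have "Good 6 4 6 {0,1,2}" by simp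
  then show ?thesis by (rule Good_mono) auto
qed

lemma G_6_6_4: "Good 6 6 4 {0,1,2}"
proof -
  have "Good (3+3) 6 4 {0,1,2}" by (rule GmergeX[OF G_3_6_4 G_3_6_4]) simp_all
  then have "Good 6 6 4 {0,1,2}" by simp
  then show ?thesis by (rule Good_mono) auto
qed

lemma G_5_5_6: "Good 5 5 6 {0,1,2}"
proof -
  have "Good 5 (3+2) 6 {0,1,2}" by (rule GmergeY[OF G_5_3_6 G_5_2_6]) simp_all
  then have "Good 5 5 6 {0,1,2}" by simp
  then show ?thesis by (rule Good_mono) auto
qed

lemma G_5_6_5: "Good 5 6 5 {0,1,2}"
proof -
  have "Good (2+3) 6 5 {0,1,2}" by (rule GmergeX[OF G_2_6_5 G_3_6_5]) simp_all
  then have "Good 5 6 5 {0,1,2}" by simp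
  then show ?thesis by (rule Good_mono) auto
qed

lemma G_6_5_5: "Good 6 5 5 {0,1,2}"
proof -
  have "Good 6 5 (3+2) {0,1,2}" by (rule GmergeZ[OF G_6_5_3 G_6_5_2]) simp_all
  then have "Good 6 5 5 {0,1,2}" by simp
  then show ?thesis by (rule Good_mono) auto
qed

lemma G_4_6_7: "Good 4 6 7 {0,1,2}"
proof -
  have "Good 4 6 (4+3) {0,1,2}" by (rule GmergeZ[OF G_4_6_4 G_4_6_3]) simp_all
  then have "Good 4 6 7 {0,1,2}" by simp
  then show ?thesis by (rule Good_mono) auto
qed

lemma G_4_7_6: "Good 4 7 6 {0,1,2}"
proof -
  have "Good 4 7 (4+2) {0,1,2}" by (rule GmergeZ[OF G_4_7_4 G_4_7_2]) simp_all
  then have "Good 4 7 6 {0,1,2}" by simp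
  then show ?thesis by (rule Good_mono) auto
qed

lemma G_6_4_7: "Good 6 4 7 {0,1,2}"
proof -
  have "Good (4+2) 4 7 {0,1,2}" by (rule GmergeX[OF G_4_4_7 G_2_4_7]) simp_all
  then have "Good 6 4 7 {0,1,2}" by simp
  then show ?thesis by (rule Good_mono) auto
qed

lemma G_6_7_4: "Good 6 7 4 {0,1,2}"
proof -
  have "Good 6 (5+2) 4 {0,1,2}" by (rule GmergeY[OF G_6_5_4 G_6_2_4]) simp_all
  then have "Good 6 7 4 {0,1,2}" by simp
  then show ?thesis by (rule Good_mono) auto
qed

lemma G_7_4_6: "Good 7 4 6 {0,1,2}"
proof -
  have "Good (4+3) 4 6 {0,1,2}" by (rule GmergeX[OF G_4_4_6 G_3_4_6]) simp_all
  then have "Good 7 4 6 {0,1,2}" by simp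
  then show ?thesis by (rule Good_mono) auto
qed

lemma G_7_6_4: "Good 7 6 4 {0,1,2}"
proof -
  have "Good (2+5) 6 4 {0,1,2}" by (rule GmergeX[OF G_2_6_4 G_5_6_4]) simp_all
  then have "Good 7 6 4 {0,1,2}" by simp
  then show ?thesis by (rule Good_mono) auto
qed

lemma G_5_6_6: "Good 5 6 6 {0,1,2}"
proof -
  have "Good 5 6 (4+2) {0,1,2}" by (rule GmergeZ[OF G_5_6_4 G_5_6_2]) simp_all
  then have "Good 5 6 6 {0,1,2}" by simp
  then show ?thesis by (rule Good_mono) auto
qed

lemma G_6_5_6: "Good 6 5 6 {0,1,2}"
proof -
  have "Good 6 5 (3+3) {0,1,2}" by (rule GmergeZ[OF G_6_5_3 G_6_5_3]) simp_all
  then have "Good 6 5 6 {0,1,2}" by simp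
  then show ?thesis by (rule Good_mono) auto
qed

lemma G_6_6_5: "Good 6 6 5 {0,1,2}"
proof -
  have "Good 6 (3+3) 5 {0,1,2}" by (rule GmergeY[OF G_6_3_5 G_6_3_5]) simp_all
  then have "Good 6 6 5 {0,1,2}" by simp
  then show ?thesis by (rule Good_mono) auto
qed

lemma G_4_7_7: "Good 4 7 7 {0,1,2}"
proof -
  have "Good 4 (5+2) 7 {0,1,2}" by (rule GmergeY[OF G_4_5_7 G_4_2_7]) simp_all
  then have "Good 4 7 7 {0,1,2}" by simp
  then show ?thesis by (rule Good_mono) auto
qed

lemma G_7_4_7: "Good 7 4 7 {0,1,2}"
proof -
  have "Good 7 4 (4+3) {0,1,2}" by (rule GmergeZ[OF G_7_4_4 G_7_4_3]) simp_all
  then have "Good 7 4 7 {0,1,2}" by simp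
  then show ?thesis by (rule Good_mono) auto
qed

lemma G_7_7_4: "Good 7 7 4 {0,1,2}"
proof -
  have "Good (3+4) 7 4 {0,1,2}" by (rule GmergeX[OF G_3_7_4 G_4_7_4]) simp_all
  then have "Good 7 7 4 {0,1,2}" by simp
  then show ?thesis by (rule Good_mono) auto
qed

lemma G_5_6_7: "Good 5 6 7 {0,1,2}"
proof -
  have "Good (2+3) 6 7 {0,1,2}" by (rule GmergeX[OF G_2_6_7 G_3_6_7]) simp_all
  then have "Good 5 6 7 {0,1,2}" by simp
  then show ?thesis by (rule Good_mono) auto
qed

lemma G_5_7_6: "Good 5 7 6 {0,1,2}"
proof -
  have "Good 5 (3+4) 6 {0,1,2}" by (rule GmergeY[OF G_5_3_6 G_5_4_6]) simp_all
  then have "Good 5 7 6 {0,1,2}" by simp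
  then show ?thesis by (rule Good_mono) auto
qed

lemma G_6_5_7: "Good 6 5 7 {0,1,2}"
proof -
  have "Good 6 5 (3+4) {0,1,2}" by (rule GmergeZ[OF G_6_5_3 G_6_5_4]) simp_all
  then have "Good 6 5 7 {0,1,2}" by simp
  then show ?thesis by (rule Good_mono) auto
qed

lemma G_6_7_5: "Good 6 7 5 {0,1,2}"
proof -
  have "Good 6 (3+4) 5 {0,1,2}" by (rule GmergeY[OF G_6_3_5 G_6_4_5]) simp_all
  then have "Good 6 7 5 {0,1,2}" by simp
  then show ?thesis by (rule Good_mono) auto
qed

lemma G_7_5_6: "Good 7 5 6 {0,1,2}"
proof -
  have "Good (3+4) 5 6 {0,1,2}" by (rule GmergeX[OF G_3_5_6 G_4_5_6]) simp_all
  then have "Good 7 5 6 {0,1,2}" by simp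
  then show ?thesis by (rule Good_mono) auto
qed

lemma G_7_6_5: "Good 7 6 5 {0,1,2}"
proof -
  have "Good (5+2) 6 5 {0,1,2}" by (rule GmergeX[OF G_5_6_5 G_2_6_5]) simp_all
  then have "Good 7 6 5 {0,1,2}" by simp
  then show ?thesis by (rule Good_mono) auto
qed

lemma G_6_6_6: "Good 6 6 6 {0,1,2}"
proof -
  have "Good (3+3) 6 6 {0,1,2}" by (rule GmergeX[OF G_3_6_6 G_3_6_6]) simp_all
  then have "Good 6 6 6 {0,1,2}" by simp
  then show ?thesis by (rule Good_mono) auto
qed

lemma G_6_6_7: "Good 6 6 7 {0,1,2}"
proof -
  have "Good (2+4) 6 7 {0,1,2}" by (rule GmergeX[OF G_2_6_7 G_4_6_7]) simp_all
  then have "Good 6 6 7 {0,1,2}" by simp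
  then show ?thesis by (rule Good_mono) auto
qed

lemma G_6_7_6: "Good 6 7 6 {0,1,2}"
proof -
  have "Good 6 (4+3) 6 {0,1,2}" by (rule GmergeY[OF G_6_4_6 G_6_3_6]) simp_all
  then have "Good 6 7 6 {0,1,2}" by simp
  then show ?thesis by (rule Good_mono) auto
qed

lemma G_7_6_6: "Good 7 6 6 {0,1,2}"
proof -
  have "Good 7 (4+2) 6 {0,1,2}" by (rule GmergeY[OF G_7_4_6 G_7_2_6]) simp_all
  then have "Good 7 6 6 {0,1,2}" by simp
  then show ?thesis by (rule Good_mono) auto
qed

lemma G_6_7_7: "Good 6 7 7 {0,1,2}"
proof -
  have "Good 6 (3+4) 7 {0,1,2}" by (rule GmergeY[OF G_6_3_7 G_6_4_7]) simp_all
  then have "Good 6 7 7 {0,1,2}" by simp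
  then show ?thesis by (rule Good_mono) auto
qed

lemma G_7_6_7: "Good 7 6 7 {0,1,2}"
proof -
  have "Good 7 6 (4+3) {0,1,2}" by (rule GmergeZ[OF G_7_6_4 G_7_6_3]) simp_all
  then have "Good 7 6 7 {0,1,2}" by simp
  then show ?thesis by (rule Good_mono) auto
qed

lemma G_7_7_6: "Good 7 7 6 {0,1,2}"
proof -
  have "Good (3+4) 7 6 {0,1,2}" by (rule GmergeX[OF G_3_7_6 G_4_7_6]) simp_all
  then have "Good 7 7 6 {0,1,2}" by simp
  then show ?thesis by (rule Good_mono) auto
qed

lemma Gn_2_3_4: "Good 2 3 4 (NS 2 3 4)" by (rule Good_mono[OF G_2_3_4]) (auto simp: NS_def)

lemma Gn_2_3_5: "Good 2 3 5 (NS 2 3 5)" by (rule Good_mono[OF G_2_3_5]) (auto simp: NS_def)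

lemma Gn_2_3_6: "Good 2 3 6 (NS 2 3 6)" by (rule Good_mono[OF G_2_3_6]) (auto simp: NS_def)

lemma Gn_2_3_7: "Good 2 3 7 (NS 2 3 7)" by (rule Good_mono[OF G_2_3_7]) (auto simp: NS_def)

lemma Gn_2_4_3: "Good 2 4 3 (NS 2 4 3)" by (rule Good_mono[OF G_2_4_3]) (auto simp: NS_def)

lemma Gn_2_4_4: "Good 2 4 4 (NS 2 4 4)" by (rule Good_mono[OF G_2_4_4]) (auto simp: NS_def)

lemma Gn_2_4_5: "Good 2 4 5 (NS 2 4 5)" by (rule Good_mono[OF G_2_4_5]) (auto simp: NS_def)

lemma Gn_2_4_6: "Good 2 4 6 (NS 2 4 6)" by (rule Good_mono[OF G_2_4_6]) (auto simp: NS_def)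

lemma Gn_2_4_7: "Good 2 4 7 (NS 2 4 7)" by (rule Good_mono[OF G_2_4_7]) (auto simp: NS_def)

lemma Gn_2_5_3: "Good 2 5 3 (NS 2 5 3)" by (rule Good_mono[OF G_2_5_3]) (auto simp: NS_def)

lemma Gn_2_5_4: "Good 2 5 4 (NS 2 5 4)" by (rule Good_mono[OF G_2_5_4]) (auto simp: NS_def)

lemma Gn_2_5_5: "Good 2 5 5 (NS 2 5 5)" by (rule Good_mono[OF G_2_5_5]) (auto simp: NS_def)

lemma Gn_2_5_6: "Good 2 5 6 (NS 2 5 6)" by (rule Good_mono[OF G_2_5_6]) (auto simp: NS_def)

lemma Gn_2_5_7: "Good 2 5 7 (NS 2 5 7)" by (rule Good_mono[OF G_2_5_7]) (auto simp: NS_def)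

lemma Gn_2_6_3: "Good 2 6 3 (NS 2 6 3)" by (rule Good_mono[OF G_2_6_3]) (auto simp: NS_def)

lemma Gn_2_6_4: "Good 2 6 4 (NS 2 6 4)" by (rule Good_mono[OF G_2_6_4]) (auto simp: NS_def)

lemma Gn_2_6_5: "Good 2 6 5 (NS 2 6 5)" by (rule Good_mono[OF G_2_6_5]) (auto simp: NS_def)

lemma Gn_2_6_6: "Good 2 6 6 (NS 2 6 6)" by (rule Good_mono[OF G_2_6_6]) (auto simp: NS_def)

lemma Gn_2_6_7: "Good 2 6 7 (NS 2 6 7)" by (rule Good_mono[OF G_2_6_7]) (auto simp: NS_def)

lemma Gn_2_7_3: "Good 2 7 3 (NS 2 7 3)" by (rule Good_mono[OF G_2_7_3]) (auto simp: NS_def)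

lemma Gn_2_7_4: "Good 2 7 4 (NS 2 7 4)" by (rule Good_mono[OF G_2_7_4]) (auto simp: NS_def)

lemma Gn_2_7_5: "Good 2 7 5 (NS 2 7 5)" by (rule Good_mono[OF G_2_7_5]) (auto simp: NS_def)

lemma Gn_2_7_6: "Good 2 7 6 (NS 2 7 6)" by (rule Good_mono[OF G_2_7_6]) (auto simp: NS_def)

lemma Gn_2_7_7: "Good 2 7 7 (NS 2 7 7)" by (rule Good_mono[OF G_2_7_7]) (auto simp: NS_def)

lemma Gn_3_2_4: "Good 3 2 4 (NS 3 2 4)" by (rule Good_mono[OF G_3_2_4]) (auto simp: NS_def)

lemma Gn_3_2_5: "Good 3 2 5 (NS 3 2 5)" by (rule Good_mono[OF G_3_2_5]) (auto simp: NS_def)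

lemma Gn_3_2_6: "Good 3 2 6 (NS 3 2 6)" by (rule Good_mono[OF G_3_2_6]) (auto simp: NS_def)

lemma Gn_3_2_7: "Good 3 2 7 (NS 3 2 7)" by (rule Good_mono[OF G_3_2_7]) (auto simp: NS_def)

lemma Gn_3_3_4: "Good 3 3 4 (NS 3 3 4)" by (rule Good_mono[OF G_3_3_4]) (auto simp: NS_def)

lemma Gn_3_3_6: "Good 3 3 6 (NS 3 3 6)" by (rule Good_mono[OF G_3_3_6]) (auto simp: NS_def)

lemma Gn_3_4_2: "Good 3 4 2 (NS 3 4 2)" by (rule Good_mono[OF G_3_4_2]) (auto simp: NS_def)

lemma Gn_3_4_3: "Good 3 4 3 (NS 3 4 3)" by (rule Good_mono[OF G_3_4_3]) (auto simp: NS_def)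

lemma Gn_3_4_4: "Good 3 4 4 (NS 3 4 4)" by (rule Good_mono[OF G_3_4_4]) (auto simp: NS_def)

lemma Gn_3_4_5: "Good 3 4 5 (NS 3 4 5)" by (rule Good_mono[OF G_3_4_5]) (auto simp: NS_def)

lemma Gn_3_4_6: "Good 3 4 6 (NS 3 4 6)" by (rule Good_mono[OF G_3_4_6]) (auto simp: NS_def)

lemma Gn_3_4_7: "Good 3 4 7 (NS 3 4 7)" by (rule Good_mono[OF G_3_4_7]) (auto simp: NS_def)

lemma Gn_3_5_2: "Good 3 5 2 (NS 3 5 2)" by (rule Good_mono[OF G_3_5_2]) (auto simp: NS_def)

lemma Gn_3_5_4: "Good 3 5 4 (NS 3 5 4)" by (rule Good_mono[OF G_3_5_4]) (auto simp: NS_def)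

lemma Gn_3_5_6: "Good 3 5 6 (NS 3 5 6)" by (rule Good_mono[OF G_3_5_6]) (auto simp: NS_def)

lemma Gn_3_6_2: "Good 3 6 2 (NS 3 6 2)" by (rule Good_mono[OF G_3_6_2]) (auto simp: NS_def)

lemma Gn_3_6_3: "Good 3 6 3 (NS 3 6 3)" by (rule Good_mono[OF G_3_6_3]) (auto simp: NS_def)

lemma Gn_3_6_4: "Good 3 6 4 (NS 3 6 4)" by (rule Good_mono[OF G_3_6_4]) (auto simp: NS_def)

lemma Gn_3_6_5: "Good 3 6 5 (NS 3 6 5)" by (rule Good_mono[OF G_3_6_5]) (auto simp: NS_def)

lemma Gn_3_6_6: "Good 3 6 6 (NS 3 6 6)" by (rule Good_mono[OF G_3_6_6]) (auto simp: NS_def)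

lemma Gn_3_6_7: "Good 3 6 7 (NS 3 6 7)" by (rule Good_mono[OF G_3_6_7]) (auto simp: NS_def)

lemma Gn_3_7_2: "Good 3 7 2 (NS 3 7 2)" by (rule Good_mono[OF G_3_7_2]) (auto simp: NS_def)

lemma Gn_3_7_4: "Good 3 7 4 (NS 3 7 4)" by (rule Good_mono[OF G_3_7_4]) (auto simp: NS_def)

lemma Gn_3_7_6: "Good 3 7 6 (NS 3 7 6)" by (rule Good_mono[OF G_3_7_6]) (auto simp: NS_def)

lemma Gn_4_2_3: "Good 4 2 3 (NS 4 2 3)" by (rule Good_mono[OF G_4_2_3]) (auto simp: NS_def)

lemma Gn_4_2_4: "Good 4 2 4 (NS 4 2 4)" by (rule Good_mono[OF G_4_2_4]) (auto simp: NS_def)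

lemma Gn_4_2_5: "Good 4 2 5 (NS 4 2 5)" by (rule Good_mono[OF G_4_2_5]) (auto simp: NS_def)

lemma Gn_4_2_6: "Good 4 2 6 (NS 4 2 6)" by (rule Good_mono[OF G_4_2_6]) (auto simp: NS_def)

lemma Gn_4_2_7: "Good 4 2 7 (NS 4 2 7)" by (rule Good_mono[OF G_4_2_7]) (auto simp: NS_def)

lemma Gn_4_3_2: "Good 4 3 2 (NS 4 3 2)" by (rule Good_mono[OF G_4_3_2]) (auto simp: NS_def)

lemma Gn_4_3_3: "Good 4 3 3 (NS 4 3 3)" by (rule Good_mono[OF G_4_3_3]) (auto simp: NS_def)

lemma Gn_4_3_4: "Good 4 3 4 (NS 4 3 4)" by (rule Good_mono[OF G_4_3_4]) (auto simp: NS_def)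

lemma Gn_4_3_5: "Good 4 3 5 (NS 4 3 5)" by (rule Good_mono[OF G_4_3_5]) (auto simp: NS_def)

lemma Gn_4_3_6: "Good 4 3 6 (NS 4 3 6)" by (rule Good_mono[OF G_4_3_6]) (auto simp: NS_def)

lemma Gn_4_3_7: "Good 4 3 7 (NS 4 3 7)" by (rule Good_mono[OF G_4_3_7]) (auto simp: NS_def)

lemma Gn_4_4_2: "Good 4 4 2 (NS 4 4 2)" by (rule Good_mono[OF G_4_4_2]) (auto simp: NS_def)

lemma Gn_4_4_3: "Good 4 4 3 (NS 4 4 3)" by (rule Good_mono[OF G_4_4_3]) (auto simp: NS_def)

lemma Gn_4_4_4: "Good 4 4 4 (NS 4 4 4)" by (rule Good_mono[OF G_4_4_4]) (auto simp: NS_def)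

lemma Gn_4_4_5: "Good 4 4 5 (NS 4 4 5)" by (rule Good_mono[OF G_4_4_5]) (auto simp: NS_def)

lemma Gn_4_4_6: "Good 4 4 6 (NS 4 4 6)" by (rule Good_mono[OF G_4_4_6]) (auto simp: NS_def)

lemma Gn_4_4_7: "Good 4 4 7 (NS 4 4 7)" by (rule Good_mono[OF G_4_4_7]) (auto simp: NS_def)

lemma Gn_4_5_2: "Good 4 5 2 (NS 4 5 2)" by (rule Good_mono[OF G_4_5_2]) (auto simp: NS_def)

lemma Gn_4_5_3: "Good 4 5 3 (NS 4 5 3)" by (rule Good_mono[OF G_4_5_3]) (auto simp: NS_def)

lemma Gn_4_5_4: "Good 4 5 4 (NS 4 5 4)" by (rule Good_mono[OF G_4_5_4]) (auto simp: NS_def)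

lemma Gn_4_5_5: "Good 4 5 5 (NS 4 5 5)" by (rule Good_mono[OF G_4_5_5]) (auto simp: NS_def)

lemma Gn_4_5_6: "Good 4 5 6 (NS 4 5 6)" by (rule Good_mono[OF G_4_5_6]) (auto simp: NS_def)

lemma Gn_4_5_7: "Good 4 5 7 (NS 4 5 7)" by (rule Good_mono[OF G_4_5_7]) (auto simp: NS_def)

lemma Gn_4_6_2: "Good 4 6 2 (NS 4 6 2)" by (rule Good_mono[OF G_4_6_2]) (auto simp: NS_def)

lemma Gn_4_6_3: "Good 4 6 3 (NS 4 6 3)" by (rule Good_mono[OF G_4_6_3]) (auto simp: NS_def)

lemma Gn_4_6_4: "Good 4 6 4 (NS 4 6 4)" by (rule Good_mono[OF G_4_6_4]) (auto simp: NS_def)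

lemma Gn_4_6_5: "Good 4 6 5 (NS 4 6 5)" by (rule Good_mono[OF G_4_6_5]) (auto simp: NS_def)

lemma Gn_4_6_6: "Good 4 6 6 (NS 4 6 6)" by (rule Good_mono[OF G_4_6_6]) (auto simp: NS_def)

lemma Gn_4_6_7: "Good 4 6 7 (NS 4 6 7)" by (rule Good_mono[OF G_4_6_7]) (auto simp: NS_def)

lemma Gn_4_7_2: "Good 4 7 2 (NS 4 7 2)" by (rule Good_mono[OF G_4_7_2]) (auto simp: NS_def)

lemma Gn_4_7_3: "Good 4 7 3 (NS 4 7 3)" by (rule Good_mono[OF G_4_7_3]) (auto simp: NS_def)

lemma Gn_4_7_4: "Good 4 7 4 (NS 4 7 4)" by (rule Good_mono[OF G_4_7_4]) (auto simp: NS_def)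

lemma Gn_4_7_5: "Good 4 7 5 (NS 4 7 5)" by (rule Good_mono[OF G_4_7_5]) (auto simp: NS_def)

lemma Gn_4_7_6: "Good 4 7 6 (NS 4 7 6)" by (rule Good_mono[OF G_4_7_6]) (auto simp: NS_def)

lemma Gn_4_7_7: "Good 4 7 7 (NS 4 7 7)" by (rule Good_mono[OF G_4_7_7]) (auto simp: NS_def)

lemma Gn_5_2_3: "Good 5 2 3 (NS 5 2 3)" by (rule Good_mono[OF G_5_2_3]) (auto simp: NS_def)

lemma Gn_5_2_4: "Good 5 2 4 (NS 5 2 4)" by (rule Good_mono[OF G_5_2_4]) (auto simp: NS_def)

lemma Gn_5_2_5: "Good 5 2 5 (NS 5 2 5)" by (rule Good_mono[OF G_5_2_5]) (auto simp: NS_def)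

lemma Gn_5_2_6: "Good 5 2 6 (NS 5 2 6)" by (rule Good_mono[OF G_5_2_6]) (auto simp: NS_def)

lemma Gn_5_2_7: "Good 5 2 7 (NS 5 2 7)" by (rule Good_mono[OF G_5_2_7]) (auto simp: NS_def)

lemma Gn_5_3_2: "Good 5 3 2 (NS 5 3 2)" by (rule Good_mono[OF G_5_3_2]) (auto simp: NS_def)

lemma Gn_5_3_4: "Good 5 3 4 (NS 5 3 4)" by (rule Good_mono[OF G_5_3_4]) (auto simp: NS_def)

lemma Gn_5_3_6: "Good 5 3 6 (NS 5 3 6)" by (rule Good_mono[OF G_5_3_6]) (auto simp: NS_def)

lemma Gn_5_4_2: "Good 5 4 2 (NS 5 4 2)" by (rule Good_mono[OF G_5_4_2]) (auto simp: NS_def)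

lemma Gn_5_4_3: "Good 5 4 3 (NS 5 4 3)" by (rule Good_mono[OF G_5_4_3]) (auto simp: NS_def)

lemma Gn_5_4_4: "Good 5 4 4 (NS 5 4 4)" by (rule Good_mono[OF G_5_4_4]) (auto simp: NS_def)

lemma Gn_5_4_5: "Good 5 4 5 (NS 5 4 5)" by (rule Good_mono[OF G_5_4_5]) (auto simp: NS_def)

lemma Gn_5_4_6: "Good 5 4 6 (NS 5 4 6)" by (rule Good_mono[OF G_5_4_6]) (auto simp: NS_def)

lemma Gn_5_4_7: "Good 5 4 7 (NS 5 4 7)" by (rule Good_mono[OF G_5_4_7]) (auto simp: NS_def)

lemma Gn_5_5_2: "Good 5 5 2 (NS 5 5 2)" by (rule Good_mono[OF G_5_5_2]) (auto simp: NS_def)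

lemma Gn_5_5_4: "Good 5 5 4 (NS 5 5 4)" by (rule Good_mono[OF G_5_5_4]) (auto simp: NS_def)

lemma Gn_5_5_6: "Good 5 5 6 (NS 5 5 6)" by (rule Good_mono[OF G_5_5_6]) (auto simp: NS_def)

lemma Gn_5_6_2: "Good 5 6 2 (NS 5 6 2)" by (rule Good_mono[OF G_5_6_2]) (auto simp: NS_def)

lemma Gn_5_6_3: "Good 5 6 3 (NS 5 6 3)" by (rule Good_mono[OF G_5_6_3]) (auto simp: NS_def)

lemma Gn_5_6_4: "Good 5 6 4 (NS 5 6 4)" by (rule Good_mono[OF G_5_6_4]) (auto simp: NS_def)

lemma Gn_5_6_5: "Good 5 6 5 (NS 5 6 5)" by (rule Good_mono[OF G_5_6_5]) (auto simp: NS_def)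

lemma Gn_5_6_6: "Good 5 6 6 (NS 5 6 6)" by (rule Good_mono[OF G_5_6_6]) (auto simp: NS_def)

lemma Gn_5_6_7: "Good 5 6 7 (NS 5 6 7)" by (rule Good_mono[OF G_5_6_7]) (auto simp: NS_def)

lemma Gn_5_7_2: "Good 5 7 2 (NS 5 7 2)" by (rule Good_mono[OF G_5_7_2]) (auto simp: NS_def)

lemma Gn_5_7_4: "Good 5 7 4 (NS 5 7 4)" by (rule Good_mono[OF G_5_7_4]) (auto simp: NS_def)

lemma Gn_5_7_6: "Good 5 7 6 (NS 5 7 6)" by (rule Good_mono[OF G_5_7_6]) (auto simp: NS_def)

lemma Gn_6_2_3: "Good 6 2 3 (NS 6 2 3)" by (rule Good_mono[OF G_6_2_3]) (auto simp: NS_def)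

lemma Gn_6_2_4: "Good 6 2 4 (NS 6 2 4)" by (rule Good_mono[OF G_6_2_4]) (auto simp: NS_def)

lemma Gn_6_2_5: "Good 6 2 5 (NS 6 2 5)" by (rule Good_mono[OF G_6_2_5]) (auto simp: NS_def)

lemma Gn_6_2_6: "Good 6 2 6 (NS 6 2 6)" by (rule Good_mono[OF G_6_2_6]) (auto simp: NS_def)

lemma Gn_6_2_7: "Good 6 2 7 (NS 6 2 7)" by (rule Good_mono[OF G_6_2_7]) (auto simp: NS_def)

lemma Gn_6_3_2: "Good 6 3 2 (NS 6 3 2)" by (rule Good_mono[OF G_6_3_2]) (auto simp: NS_def)

lemma Gn_6_3_3: "Good 6 3 3 (NS 6 3 3)" by (rule Good_mono[OF G_6_3_3]) (auto simp: NS_def)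

lemma Gn_6_3_4: "Good 6 3 4 (NS 6 3 4)" by (rule Good_mono[OF G_6_3_4]) (auto simp: NS_def)

lemma Gn_6_3_5: "Good 6 3 5 (NS 6 3 5)" by (rule Good_mono[OF G_6_3_5]) (auto simp: NS_def)

lemma Gn_6_3_6: "Good 6 3 6 (NS 6 3 6)" by (rule Good_mono[OF G_6_3_6]) (auto simp: NS_def)

lemma Gn_6_3_7: "Good 6 3 7 (NS 6 3 7)" by (rule Good_mono[OF G_6_3_7]) (auto simp: NS_def)

lemma Gn_6_4_2: "Good 6 4 2 (NS 6 4 2)" by (rule Good_mono[OF G_6_4_2]) (auto simp: NS_def)

lemma Gn_6_4_3: "Good 6 4 3 (NS 6 4 3)" by (rule Good_mono[OF G_6_4_3]) (auto simp: NS_def)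

lemma Gn_6_4_4: "Good 6 4 4 (NS 6 4 4)" by (rule Good_mono[OF G_6_4_4]) (auto simp: NS_def)

lemma Gn_6_4_5: "Good 6 4 5 (NS 6 4 5)" by (rule Good_mono[OF G_6_4_5]) (auto simp: NS_def)

lemma Gn_6_4_6: "Good 6 4 6 (NS 6 4 6)" by (rule Good_mono[OF G_6_4_6]) (auto simp: NS_def)

lemma Gn_6_4_7: "Good 6 4 7 (NS 6 4 7)" by (rule Good_mono[OF G_6_4_7]) (auto simp: NS_def)

lemma Gn_6_5_2: "Good 6 5 2 (NS 6 5 2)" by (rule Good_mono[OF G_6_5_2]) (auto simp: NS_def)

lemma Gn_6_5_3: "Good 6 5 3 (NS 6 5 3)" by (rule Good_mono[OF G_6_5_3]) (auto simp: NS_def)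

lemma Gn_6_5_4: "Good 6 5 4 (NS 6 5 4)" by (rule Good_mono[OF G_6_5_4]) (auto simp: NS_def)

lemma Gn_6_5_5: "Good 6 5 5 (NS 6 5 5)" by (rule Good_mono[OF G_6_5_5]) (auto simp: NS_def)

lemma Gn_6_5_6: "Good 6 5 6 (NS 6 5 6)" by (rule Good_mono[OF G_6_5_6]) (auto simp: NS_def)

lemma Gn_6_5_7: "Good 6 5 7 (NS 6 5 7)" by (rule Good_mono[OF G_6_5_7]) (auto simp: NS_def)

lemma Gn_6_6_2: "Good 6 6 2 (NS 6 6 2)" by (rule Good_mono[OF G_6_6_2]) (auto simp: NS_def)

lemma Gn_6_6_3: "Good 6 6 3 (NS 6 6 3)" by (rule Good_mono[OF G_6_6_3]) (auto simp: NS_def)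

lemma Gn_6_6_4: "Good 6 6 4 (NS 6 6 4)" by (rule Good_mono[OF G_6_6_4]) (auto simp: NS_def)

lemma Gn_6_6_5: "Good 6 6 5 (NS 6 6 5)" by (rule Good_mono[OF G_6_6_5]) (auto simp: NS_def)

lemma Gn_6_6_6: "Good 6 6 6 (NS 6 6 6)" by (rule Good_mono[OF G_6_6_6]) (auto simp: NS_def)

lemma Gn_6_6_7: "Good 6 6 7 (NS 6 6 7)" by (rule Good_mono[OF G_6_6_7]) (auto simp: NS_def)

lemma Gn_6_7_2: "Good 6 7 2 (NS 6 7 2)" by (rule Good_mono[OF G_6_7_2]) (auto simp: NS_def)

lemma Gn_6_7_3: "Good 6 7 3 (NS 6 7 3)" by (rule Good_mono[OF G_6_7_3]) (auto simp: NS_def)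

lemma Gn_6_7_4: "Good 6 7 4 (NS 6 7 4)" by (rule Good_mono[OF G_6_7_4]) (auto simp: NS_def)

lemma Gn_6_7_5: "Good 6 7 5 (NS 6 7 5)" by (rule Good_mono[OF G_6_7_5]) (auto simp: NS_def)

lemma Gn_6_7_6: "Good 6 7 6 (NS 6 7 6)" by (rule Good_mono[OF G_6_7_6]) (auto simp: NS_def)

lemma Gn_6_7_7: "Good 6 7 7 (NS 6 7 7)" by (rule Good_mono[OF G_6_7_7]) (auto simp: NS_def)

lemma Gn_7_2_3: "Good 7 2 3 (NS 7 2 3)" by (rule Good_mono[OF G_7_2_3]) (auto simp: NS_def)

lemma Gn_7_2_4: "Good 7 2 4 (NS 7 2 4)" by (rule Good_mono[OF G_7_2_4]) (auto simp: NS_def)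

lemma Gn_7_2_5: "Good 7 2 5 (NS 7 2 5)" by (rule Good_mono[OF G_7_2_5]) (auto simp: NS_def)

lemma Gn_7_2_6: "Good 7 2 6 (NS 7 2 6)" by (rule Good_mono[OF G_7_2_6]) (auto simp: NS_def)

lemma Gn_7_2_7: "Good 7 2 7 (NS 7 2 7)" by (rule Good_mono[OF G_7_2_7]) (auto simp: NS_def)

lemma Gn_7_3_2: "Good 7 3 2 (NS 7 3 2)" by (rule Good_mono[OF G_7_3_2]) (auto simp: NS_def)

lemma Gn_7_3_4: "Good 7 3 4 (NS 7 3 4)" by (rule Good_mono[OF G_7_3_4]) (auto simp: NS_def)

lemma Gn_7_3_6: "Good 7 3 6 (NS 7 3 6)" by (rule Good_mono[OF G_7_3_6]) (auto simp: NS_def)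

lemma Gn_7_4_2: "Good 7 4 2 (NS 7 4 2)" by (rule Good_mono[OF G_7_4_2]) (auto simp: NS_def)

lemma Gn_7_4_3: "Good 7 4 3 (NS 7 4 3)" by (rule Good_mono[OF G_7_4_3]) (auto simp: NS_def)

lemma Gn_7_4_4: "Good 7 4 4 (NS 7 4 4)" by (rule Good_mono[OF G_7_4_4]) (auto simp: NS_def)

lemma Gn_7_4_5: "Good 7 4 5 (NS 7 4 5)" by (rule Good_mono[OF G_7_4_5]) (auto simp: NS_def)

lemma Gn_7_4_6: "Good 7 4 6 (NS 7 4 6)" by (rule Good_mono[OF G_7_4_6]) (auto simp: NS_def)

lemma Gn_7_4_7: "Good 7 4 7 (NS 7 4 7)" by (rule Good_mono[OF G_7_4_7]) (auto simp: NS_def)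

lemma Gn_7_5_2: "Good 7 5 2 (NS 7 5 2)" by (rule Good_mono[OF G_7_5_2]) (auto simp: NS_def)

lemma Gn_7_5_4: "Good 7 5 4 (NS 7 5 4)" by (rule Good_mono[OF G_7_5_4]) (auto simp: NS_def)

lemma Gn_7_5_6: "Good 7 5 6 (NS 7 5 6)" by (rule Good_mono[OF G_7_5_6]) (auto simp: NS_def)

lemma Gn_7_6_2: "Good 7 6 2 (NS 7 6 2)" by (rule Good_mono[OF G_7_6_2]) (auto simp: NS_def)

lemma Gn_7_6_3: "Good 7 6 3 (NS 7 6 3)" by (rule Good_mono[OF G_7_6_3]) (auto simp: NS_def)

lemma Gn_7_6_4: "Good 7 6 4 (NS 7 6 4)" by (rule Good_mono[OF G_7_6_4]) (auto simp: NS_def)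

lemma Gn_7_6_5: "Good 7 6 5 (NS 7 6 5)" by (rule Good_mono[OF G_7_6_5]) (auto simp: NS_def)

lemma Gn_7_6_6: "Good 7 6 6 (NS 7 6 6)" by (rule Good_mono[OF G_7_6_6]) (auto simp: NS_def)

lemma Gn_7_6_7: "Good 7 6 7 (NS 7 6 7)" by (rule Good_mono[OF G_7_6_7]) (auto simp: NS_def)

lemma Gn_7_7_2: "Good 7 7 2 (NS 7 7 2)" by (rule Good_mono[OF G_7_7_2]) (auto simp: NS_def)

lemma Gn_7_7_4: "Good 7 7 4 (NS 7 7 4)" by (rule Good_mono[OF G_7_7_4]) (auto simp: NS_def)

lemma Gn_7_7_6: "Good 7 7 6 (NS 7 7 6)" by (rule Good_mono[OF G_7_7_6]) (auto simp: NS_def)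

lemma small: assumes "a \<le> 7" "b \<le> 7" "c \<le> 7" "goodT a b c" shows "Good a b c (NS a b c)"
proof -
  have "2 \<le> a" "2 \<le> b" "2 \<le> c" using assms(4) unfolding goodT_def by auto
  then have ca: "a = 2 \<or> a = 3 \<or> a = 4 \<or> a = 5 \<or> a = 6 \<or> a = 7"
    and cb: "b = 2 \<or> b = 3 \<or> b = 4 \<or> b = 5 \<or> b = 6 \<or> b = 7"
    and cc: "c = 2 \<or> c = 3 \<or> c = 4 \<or> c = 5 \<or> c = 6 \<or> c = 7" using assms(1-3) by auto
  show ?thesis using ca cb cc assms(4)
    by (elim disjE) (simp_all add: goodT_def Gn_2_3_4 Gn_2_3_5 Gn_2_3_6 Gn_2_3_7 Gn_2_4_3 Gn_2_4_4 Gn_2_4_5 Gn_2_4_6 Gn_2_4_7 Gn_2_5_3 Gn_2_5_4 Gn_2_5_5 Gn_2_5_6 Gn_2_5_7 Gn_2_6_3 Gn_2_6_4 Gn_2_6_5 Gn_2_6_6 Gn_2_6_7 Gn_2_7_3 Gn_2_7_4 Gn_2_7_5 Gn_2_7_6 Gn_2_7_7 Gn_3_2_4 Gn_3_2_5 Gn_3_2_6 Gn_3_2_7 Gn_3_3_4 Gn_3_3_6 Gn_3_4_2 Gn_3_4_3 Gn_3_4_4 Gn_3_4_5 Gn_3_4_6 Gn_3_4_7 Gn_3_5_2 Gn_3_5_4 Gn_3_5_6 Gn_3_6_2 Gn_3_6_3 Gn_3_6_4 Gn_3_6_5 Gn_3_6_6 Gn_3_6_7 Gn_3_7_2 Gn_3_7_4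 Gn_3_7_6 Gn_4_2_3 Gn_4_2_4 Gn_4_2_5 Gn_4_2_6 Gn_4_2_7 Gn_4_3_2 Gn_4_3_3 Gn_4_3_4 Gn_4_3_5 Gn_4_3_6 Gn_4_3_7 Gn_4_4_2 Gn_4_4_3 Gn_4_4_4 Gn_4_4_5 Gn_4_4_6 Gn_4_4_7 Gn_4_5_2 Gn_4_5_3 Gn_4_5_4 Gn_4_5_5 Gn_4_5_6 Gn_4_5_7 Gn_4_6_2 Gn_4_6_3 Gn_4_6_4 Gn_4_6_5 Gn_4_6_6 Gn_4_6_7 Gn_4_7_2 Gn_4_7_3 Gn_4_7_4 Gn_4_7_5 Gn_4_7_6 Gn_4_7_7 Gn_5_2_3 Gn_5_2_4 Gn_5_2_5 Gn_5_2_6 Gn_5_2_7 Gn_5_3_2 Gn_5_3_4 Gn_5_3_6 Gn_5_4_2 Gn_5_4_3 Gn_5_4_4 Gn_5_4_5 Gn_5_4_6 Gn_5_4_7 Gn_5_5_2 Gn_5_5_4 Gn_5_5_6 Gn_5_6_2 Gn_5_6_3 Gn_5_6_4 Gn_5_6_5 Gn_5_6_6 Gn_5_6_7 Gn_5_7_2 Gn_5_7_4 Gn_5_7_6 Gn_6_2_3 Gn_6_2_4 Gn_6_2_5 Gn_6_2_6 Gn_6_2_7 Gn_6_3_2 Gn_6_3_3 Gn_6_3_4 Gn_6_3_5 Gn_6_3_6 Gn_6_3_7 Gn_6_4_2 Gn_6_4_3 Gn_6_4_4 Gn_6_4_5 Gn_6_4_6 Gn_6_4_7 Gn_6_5_2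 Gn_6_5_3 Gn_6_5_4 Gn_6_5_5 Gn_6_5_6 Gn_6_5_7 Gn_6_6_2 Gn_6_6_3 Gn_6_6_4 Gn_6_6_5 Gn_6_6_6 Gn_6_6_7 Gn_6_7_2 Gn_6_7_3 Gn_6_7_4 Gn_6_7_5 Gn_6_7_6 Gn_6_7_7 Gn_7_2_3 Gn_7_2_4 Gn_7_2_5 Gn_7_2_6 Gn_7_2_7 Gn_7_3_2 Gn_7_3_4 Gn_7_3_6 Gn_7_4_2 Gn_7_4_3 Gn_7_4_4 Gn_7_4_5 Gn_7_4_6 Gn_7_4_7 Gn_7_5_2 Gn_7_5_4 Gn_7_5_6 Gn_7_6_2 Gn_7_6_3 Gn_7_6_4 Gn_7_6_5 Gn_7_6_6 Gn_7_6_7 Gn_7_7_2 Gn_7_7_4 Gn_7_7_6)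
qed


lemma main_good: "goodT a b c \<Longrightarrow> Good a b c (NS a b c)"
proof (induction "a+b+c" arbitrary: a b c rule: less_induct)
  case less
  show ?case
  proof (cases "8 \<le> c")
    case True
    have g1: "goodT a b 4" "goodT a b (c-4)" using less.prems True unfolding goodT_def by auto
    have "Good a b 4 (NS a b 4)" using less.hyps[OF _ g1(1)] True by simp
    moreover have "Good a b (c-4) (NS a b (c-4))" using less.hyps[OF _ g1(2)] True by simp
    ultimately have "Good a b (4 + (c-4)) {0,1,2}"
      by (intro GmergeZ) (use True in \<open>auto simp: NS_def\<close>)
    then show ?thesis using True by (auto intro: Good_mono simp: NS_def)
  next
    case c: False
    show ?thesis
    proof (cases "8 \<le> b")
      case True
      have g1: "goodT a 4 c" "goodT a (b-4) c" using less.prems True unfolding goodT_def by auto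
      have "Good a 4 c (NS a 4 c)" using less.hyps[OF _ g1(1)] True by simp
      moreover have "Good a (b-4) c (NS a (b-4) c)" using less.hyps[OF _ g1(2)] True by simp
      ultimately have "Good a (4 + (b-4)) c {0,1,2}"
        by (intro GmergeY) (use True in \<open>auto simp: NS_def\<close>)
      then show ?thesis using True by (auto intro: Good_mono simp: NS_def)
    next
      case b: False
      show ?thesis
      proof (cases "8 \<le> a")
        case True
        have g1: "goodT 4 b c" "goodT (a-4) b c" using less.prems True unfolding goodT_def by auto
        have "Good 4 b c (NS 4 b c)" using less.hyps[OF _ g1(1)] True by simp
        moreover have "Good (a-4) b c (NS (a-4) b c)" using less.hyps[OF _ g1(2)] True by simp
        ultimately have "Good (4 + (a-4)) b c {0,1,2}"
          by (intro GmergeX) (use True in \<open>auto simp: NS_def\<close>)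
        then show ?thesis using True by (auto intro: Good_mono simp: NS_def)
      next
        case False
        then show ?thesis using small less.prems b c by simp
      qed
    qed
  qed
qed

lemma good_has: "goodT a b c \<Longrightarrow> has_bisited_tour a b c"
  using main_good[of a b c] unfolding Good_def GoodL_def using to_has by blast



lemma tour_facts:
  assumes "closed_tour B N a"
  shows "finite B" "N = card B" "\<And>i. i < N \<Longrightarrow> a i \<in> B" "\<And>i. i < N \<Longrightarrow> kn (psub (a (Suc i mod N)) (a i))"
    "\<And>b. b \<in> B \<Longrightarrow> \<exists>i<N. a i = b" "3 \<le> N"
proof -
  show "finite B" "N = card B" "3 \<le> N" using assms unfolding closed_tour_def by auto
  have bij: "bij_betw a {..<N} B" using assms unfolding closed_tour_def by auto
  show "\<And>i. i < N \<Longrightarrow> a i \<in> B" using bij by (auto dest: bij_betw_apply)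
  show "\<And>i. i < N \<Longrightarrow> kn (psub (a (Suc i mod N)) (a i))" using assms unfolding closed_tour_def knight_iff by auto
  show "\<And>b. b \<in> B \<Longrightarrow> \<exists>i<N. a i = b" using bij unfolding bij_betw_def by auto
qed

definition csum :: "pt \<Rightarrow> int" where "csum p = (case p of (x,y,z) \<Rightarrow> x+y+z)"
definition zc :: "pt \<Rightarrow> int" where "zc p = (case p of (x,y,z) \<Rightarrow> z)"

lemma abs1: "\<bar>x::int\<bar> = 1 \<Longrightarrow> x = 1 \<or> x = -1" by arith
lemma abs2: "\<bar>x::int\<bar> = 2 \<Longrightarrow> x = 2 \<or> x = -2" by arith

lemma kn_odd0: "kn (x,y,z) \<Longrightarrow> odd (x+y+z)"
  unfolding kn_def by (auto dest!: abs1 abs2)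

lemma kn_odd: "kn (psub q p) \<Longrightarrow> odd (csum q - csum p)"
proof -
  assume k: "kn (psub q p)"
  obtain x1 y1 z1 where q: "q = (x1,y1,z1)" by (cases q)
  obtain x2 y2 z2 where p: "p = (x2,y2,z2)" by (cases p)
  have "odd ((x1-x2)+(y1-y2)+(z1-z2))" using kn_odd0 k unfolding p q psub_eq by blast
  moreover have "csum q - csum p = (x1-x2)+(y1-y2)+(z1-z2)" unfolding p q csum_def by simp
  ultimately show ?thesis by simp
qed

lemma parity_N:
  assumes "closed_tour B N a" shows "even N"
proof -
  note T = tour_facts[OF assms]
  have step: "\<And>i. i < N \<Longrightarrow> odd (csum (a (Suc i mod N)) - csum (a i))" using T(4) kn_odd by blast
  have ind: "\<And>i. i < N \<Longrightarrow> even (csum (a i) - csum (a 0) - int i)"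
  proof -
    fix i show "i < N \<Longrightarrow> even (csum (a i) - csum (a 0) - int i)"
    proof (induction i)
      case 0 then show ?case by simp
    next
      case (Suc i)
      then have "Suc i mod N = Suc i" by simp
      then have "odd (csum (a (Suc i)) - csum (a i))" using step[of i] Suc by simp
      then show ?case using Suc by presburger
    qed
  qed
  have N1: "N - 1 < N" "Suc (N - 1) mod N = 0" using T(6) by auto
  have "odd (csum (a 0) - csum (a (N-1)))" using step[OF N1(1)] N1(2) by simp
  moreover have "even (csum (a (N-1)) - csum (a 0) - int (N - 1))" using ind N1 by blast
  ultimately show ?thesis using T(6) by presburger
qed

lemma nec_a: assumes "has_bisited_tour m n p" shows "even m \<or> even n \<or> even p"
proof -
  obtain N a where "closed_tour (board m n p) N a" using assms unfolding has_bisited_tour_def by blast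
  then have "even N" "N = card (board m n p)" using parity_N tour_facts by blast+
  then have "even (m*n*p)" using card_board by simp
  then show ?thesis by simp
qed

lemma nec_b: assumes "has_bisited_tour m n p" "m \<le> 2" "n \<le> 2" "2 \<le> p" shows False
proof -
  obtain N a where t: "closed_tour (board m n p) N a" using assms unfolding has_bisited_tour_def by blast
  note T = tour_facts[OF t]
  have step: "\<And>i. i < N \<Longrightarrow> even (zc (a (Suc i mod N)) - zc (a i))"
  proof -
    fix i assume i: "i < N"
    have "Suc i mod N < N" using i by simp
    then have m1: "a (Suc i mod N) \<in> board m n p" and m2: "a i \<in> board m n p" using T(3) i by blast+
    have k: "kn (psub (a (Suc i mod N)) (a i))" using T(4) i by blast
    obtain x1 y1 z1 where e1: "a (Suc i mod N) = (x1,y1,z1)" by (cases "a (Suc i mod N)")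
    obtain x2 y2 z2 where e2: "a i = (x2,y2,z2)" by (cases "a i")
    have bx: "\<bar>x1 - x2\<bar> \<le> 1" "\<bar>y1 - y2\<bar> \<le> 1" using m1 m2 assms(2,3) unfolding e1 e2 board_def by auto
    have "\<bar>z1 - z2\<bar> = 2" using k bx unfolding e1 e2 kn_def by auto
    then have "z1 - z2 = 2 \<or> z1 - z2 = -2" by (rule abs2)
    then have "even (z1 - z2)" by presburger
    then show "even (zc (a (Suc i mod N)) - zc (a i))" unfolding e1 e2 zc_def by simp
  qed
  have ind: "\<And>i. i < N \<Longrightarrow> even (zc (a i) - zc (a 0))"
  proof -
    fix i show "i < N \<Longrightarrow> even (zc (a i) - zc (a 0))"
    proof (induction i)
      case 0 then show ?case by simp
    next
      case (Suc i)
      then have "Suc i mod N = Suc i" by simp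
      then have "even (zc (a (Suc i)) - zc (a i))" using step[of i] Suc by simp
      then show ?case using Suc by presburger
    qed
  qed
  have N3: "3 \<le> m*n*p" using T(2) T(6) card_board by metis
  have "m \<noteq> 0" "n \<noteq> 0" using N3 by (metis mult_0 mult_0_right not_numeral_le_zero)+
  then have "(1,1,1) \<in> board m n p" "(1,1,2) \<in> board m n p" using assms(4)
    unfolding board_def by auto
  then obtain i j where "i < N" "a i = (1,1,1)" "j < N" "a j = (1,1,2)" using T(5) by metis
  then show False using ind[of i] ind[of j] unfolding zc_def by auto
qed

lemma nec_c: assumes "has_bisited_tour 2 3 3" shows False
proof -
  obtain N a where t: "closed_tour (board 2 3 3) N a" using assms unfolding has_bisited_tour_def by blast
  note T = tour_facts[OF t]
  have "(1,2,2) \<in> board 2 3 3" unfolding board_def by auto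
  then obtain i where i: "i < N" "a i = (1,2,2)" using T(5) by blast
  have "Suc i mod N < N" using i by simp
  then have m1: "a (Suc i mod N) \<in> board 2 3 3" using T(3) by blast
  have k: "kn (psub (a (Suc i mod N)) (a i))" using T(4) i by blast
  obtain x y z where e1: "a (Suc i mod N) = (x,y,z)" by (cases "a (Suc i mod N)")
  show False using m1 k i(2) unfolding e1 board_def kn_def by (auto simp: abs_if split: if_splits)
qed


theorem theorem4p4:
  fixes m n p :: nat
  assumes "2 \<le> m" and "m \<le> n" and "n \<le> p"
  shows "has_bisited_tour m n p \<longleftrightarrow> ((even m \<or> even n \<or> even p) \<and> 3 \<le> n \<and> 4 \<le> p)"
proof
  assume H: "has_bisited_tour m n p"
  have ev: "even m \<or> even n \<or> even p" using nec_a[OF H] .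
  have n3: "3 \<le> n"
  proof (rule ccontr)
    assume "\<not> 3 \<le> n"
    then show False using nec_b[OF H] assms by simp
  qed
  have p4: "4 \<le> p"
  proof (rule ccontr)
    assume "\<not> 4 \<le> p"
    then have "n = 3" "p = 3" using n3 assms by auto
    moreover have "m = 2 \<or> m = 3" using assms \<open>n = 3\<close> by auto
    ultimately show False using ev H nec_c by auto
  qed
  show "(even m \<or> even n \<or> even p) \<and> 3 \<le> n \<and> 4 \<le> p" using ev n3 p4 by blast
next
  assume "(even m \<or> even n \<or> even p) \<and> 3 \<le> n \<and> 4 \<le> p"
  then have "goodT m n p" using assms unfolding goodT_def by auto
  then show "has_bisited_tour m n p" by (rule good_has)
qed

end
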